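(* Let $G$ be a mean-payoff game with limited-observation and $\Gamma_G$ its associated reachability game. If Eve (respectively Adam) has a winning strategy in $\Gamma_G$, then Eve (respectively Adam) has a winning observation-based strategy with finite memory in $G$.
   Context: An MPG with limited-observation is a tuple $G=\langle Q,q_I,\Sigma,\Delta,w,Obs\rangle$: $Q$ finite set of states, $q_I\in Q$, $\Sigma$ finite set of actions, $\Delta\subseteq Q\times\Sigma\times Q$ total, $w:\Delta\to\mathbb{Z}$, $Obs$ a partition of $Q$, with $\{q_I\}\in Obs$ and, for each $o\in Obs,\sigma\in\Sigma$, $\mathrm{post}_\sigma(o)=\{q':\exists q\in o,(q,\sigma,q')\in\Delta\}$ a union of elements of $Obs$. Abstract paths $o_0\sigma_0o_1\ldots$ ($o_i\in Obs$, with some transition under $\sigma_i$ from $o_i$ to $o_{i+1}$), concrete paths $\gamma(\psi)$ (sequences $q_0\sigma_0q_1\ldots$ with $q_i\in o_i$, $(q_i,\sigma_i,q_{i+1})\in\Delta$), plays (infinite abstract paths starting at $\{q_I\}$), $\mathrm{Prefs}(G)$ (finite prefixes of plays ending in an observation), $\underline{MP}(\pi)=\liminf_n\frac1n\sum_{i<n}w(q_i,\sigma_i,q_{i+1})$. A play $\psi$ is winning for Eve if $\underline{MP}(\pi)\ge0$ for all $\pi\in\gamma(\psi)$, else for Adam. Observation-based strategies: for Eve $\lambda_\exists:\mathrm{Prefs}(G)\to\Sigma$; for Adam $\lambda_\forall:\mathrm{Prefs}(G)\times\Sigma\to Obs$ with $\lambda_\forall(o_0\ldots o_n,\sigma)\cap\mathrm{post}_\sigma(o_n)\ne\emptyset$;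 consistency as usual; winning if all consistent plays are winning. Eve's strategy has memory $m$ if there are $M$ with $|M|=m$, $m_0\in M$, $\alpha_u:M\times Obs\to M$, $\alpha_o:M\times Obs\to\Sigma$ with $\lambda_\exists(o_0\sigma_0\ldots o_n)=\alpha_o(m_n,o_n)$, $m_{i+1}=\alpha_u(m_i,o_i)$; Adam's has memory $m$ if there are $M$, $m_0$, $\alpha_u:M\times Obs\times\Sigma\to M$, $\alpha_o:M\times Obs\times\Sigma\to Obs$ with $\lambda_\forall(o_0\sigma_0\ldots o_n,\sigma_n)=\alpha_o(m_n,o_n,\sigma_n)$, $m_{i+1}=\alpha_u(m_i,o_i,\sigma_i)$. Finite memory means memory $m$ for some finite $m$. Reachability game $\Gamma_G$: let $\mathcal{F}$ be the set of functions $f:Q\to\mathbb{Z}\cup\{+\infty,\bot\}$, $\mathrm{supp}(f)=\{q:f(q)\ne\bot\}$. $f'$ is a $\sigma$-successor of $f$ if $\mathrm{supp}(f')\in Obs$, $\mathrm{supp}(f')\subseteq\mathrm{post}_\sigma(\mathrm{supp}(f))$, and for every $q\in\mathrm{supp}(f')$, $f'(q)$ equals either $\min\{f(q')+w(q',\sigma,q): q'\in\mathrm{supp}(f),(q',\sigma,q)\in\Delta\}$ or $+\infty$. For $k\in\mathbb{N}$, $f\preceq_k f'$ iff $\mathrm{supp}(f)=\mathrm{supp}(f')$ and $f(q)+k\le f'(q)$ for all $q\in\mathrm{supp}(f)$ (with $+\infty+k=+\infty$). Let $f_I(q_I)=0$ and $f_I(q)=\bot$ for $q\ne q_I$. $\Pi_G$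 is the set of sequences $f_0\sigma_0f_1\ldots\sigma_{n-1}f_n$ with $f_0=f_I$, each $f_{i+1}$ a $\sigma_i$-successor of $f_i$, and for all $0\le i<j<n$: $f_i\not\preceq_0 f_j$ and $f_j\not\preceq_1 f_i$. $\mathcal{T}_\exists$ is the set of such sequences with $f_i\preceq_0 f_n$ for some $i<n$; $\mathcal{T}_\forall$ is the set of such sequences with, for some $i<n$, $f_n\preceq_1 f_i$ and $f_i(q)\ne+\infty$ for some $q\in\mathrm{supp}(f_i)$. $\Gamma_G$ is played from the sequence $f_I$: at the current sequence $x$, Eve chooses $\sigma\in\Sigma$ and Adam chooses $f$ with $x\sigma f\in\Pi_G$; the game stops when the current sequence lies in $\mathcal{T}_\exists$ (Eve wins) or in $\mathcal{T}_\forall$ (Adam wins). A strategy in $\Gamma_G$ (a function from histories to actions for Eve, to successor sequences for Adam) is winning for Eve (Adam) if every play consistent with it reaches $\mathcal{T}_\exists$ ($\mathcal{T}_\forall$). *)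

theory Defs
  imports Complex_Main "HOL-Library.Extended_Real"
begin

record ('q, 'a) mpg =
  states :: "'q set"
  init   :: "'q"
  acts   :: "'a set"
  trans  :: "('q \<times> 'a \<times> 'q) set"
  weight :: "'q \<Rightarrow> 'a \<Rightarrow> 'q \<Rightarrow> int"
  obs    :: "'q set set"

definition post :: "('q, 'a) mpg \<Rightarrow> 'a \<Rightarrow> 'q set \<Rightarrow> 'q set" where
  "post G \<sigma> S = {q'. \<exists>q\<in>S. (q, \<sigma>, q') \<in> trans G}"

definition mpg_lo :: "('q, 'a) mpg \<Rightarrow> bool" where
  "mpg_lo G \<longleftrightarrow>
     finite (states G) \<and> init G \<in> states G \<and> finite (acts G) \<and> acts G \<noteq> {} \<and>
     trans G \<subseteq> states G \<times> acts G \<times> states G \<and>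
     (\<forall>q\<in>states G. \<forall>\<sigma>\<in>acts G. \<exists>q'. (q, \<sigma>, q') \<in> trans G) \<and>
     (\<forall>ob\<in>obs G. ob \<noteq> {} \<and> ob \<subseteq> states G) \<and> \<Union>(obs G) = states G \<and>
     (\<forall>o1\<in>obs G. \<forall>o2\<in>obs G. o1 \<noteq> o2 \<longrightarrow> o1 \<inter> o2 = {}) \<and>
     {init G} \<in> obs G \<and>
     (\<forall>ob\<in>obs G. \<forall>\<sigma>\<in>acts G. \<exists>S\<subseteq>obs G. post G \<sigma> ob = \<Union>S)"

definition is_play :: "('q, 'a) mpg \<Rightarrow> (nat \<Rightarrow> 'q set) \<Rightarrow> (nat \<Rightarrow> 'a) \<Rightarrow> bool" where
  "is_play G os as \<longleftrightarrow> os 0 = {init G} \<and>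
     (\<forall>i. os i \<in> obs G \<and> as i \<in> acts G \<and>
          (\<exists>q\<in>os i. \<exists>q'\<in>os (Suc i). (q, as i, q') \<in> trans G))"

definition is_concrete :: "('q, 'a) mpg \<Rightarrow> (nat \<Rightarrow> 'q set) \<Rightarrow> (nat \<Rightarrow> 'a) \<Rightarrow> (nat \<Rightarrow> 'q) \<Rightarrow> bool" where
  "is_concrete G os as qs \<longleftrightarrow> (\<forall>i. qs i \<in> os i \<and> (qs i, as i, qs (Suc i)) \<in> trans G)"

definition mp_inf :: "('q, 'a) mpg \<Rightarrow> (nat \<Rightarrow> 'a) \<Rightarrow> (nat \<Rightarrow> 'q) \<Rightarrow> ereal" where
  "mp_inf G as qs = Liminf sequentially
     (\<lambda>n. ereal ((\<Sum>i<n. real_of_int (weight G (qs i) (as i) (qs (Suc i)))) / real n))"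

definition eve_wins_play :: "('q, 'a) mpg \<Rightarrow> (nat \<Rightarrow> 'q set) \<Rightarrow> (nat \<Rightarrow> 'a) \<Rightarrow> bool" where
  "eve_wins_play G os as \<longleftrightarrow> (\<forall>qs. is_concrete G os as qs \<longrightarrow> mp_inf G as qs \<ge> 0)"

text \<open>Prefs(G): a prefix o_0 sigma_0 ... o_n is a pair (list of n+1 observations,
  list of n actions) which is the prefix of some play.\<close>
definition is_pref :: "('q, 'a) mpg \<Rightarrow> 'q set list \<Rightarrow> 'a list \<Rightarrow> bool" where
  "is_pref G ol al \<longleftrightarrow> (\<exists>os as. is_play G os as \<and>
     ol = map os [0..<Suc (length al)] \<and> al = map as [0..<length al])"

definition eve_obs_strat :: "('q, 'a) mpg \<Rightarrow> ('q set list \<Rightarrow> 'a list \<Rightarrow> 'a) \<Rightarrow> bool" where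
  "eve_obs_strat G str \<longleftrightarrow> (\<forall>ol al. is_pref G ol al \<longrightarrow> str ol al \<in> acts G)"

definition eve_cons_play :: "('q set list \<Rightarrow> 'a list \<Rightarrow> 'a) \<Rightarrow> (nat \<Rightarrow> 'q set) \<Rightarrow> (nat \<Rightarrow> 'a) \<Rightarrow> bool" where
  "eve_cons_play str os as \<longleftrightarrow> (\<forall>n. as n = str (map os [0..<Suc n]) (map as [0..<n]))"

definition eve_winning_obs :: "('q, 'a) mpg \<Rightarrow> ('q set list \<Rightarrow> 'a list \<Rightarrow> 'a) \<Rightarrow> bool" where
  "eve_winning_obs G str \<longleftrightarrow> eve_obs_strat G str \<and>
     (\<forall>os as. is_play G os as \<and> eve_cons_play str os as \<longrightarrow> eve_wins_play G os as)"

text \<open>Finite memory; memory states are encoded as natural numbers (M a finite set of nats).\<close>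
definition eve_finite_mem :: "('q, 'a) mpg \<Rightarrow> ('q set list \<Rightarrow> 'a list \<Rightarrow> 'a) \<Rightarrow> bool" where
  "eve_finite_mem G str \<longleftrightarrow>
     (\<exists>(M :: nat set) m0 (\<alpha>u :: nat \<Rightarrow> 'q set \<Rightarrow> nat) (\<alpha>o :: nat \<Rightarrow> 'q set \<Rightarrow> 'a).
        finite M \<and> m0 \<in> M \<and>
        (\<forall>m\<in>M. \<forall>ob\<in>obs G. \<alpha>u m ob \<in> M \<and> \<alpha>o m ob \<in> acts G) \<and>
        (\<forall>ol al. is_pref G ol al \<longrightarrow> str ol al = \<alpha>o (foldl \<alpha>u m0 (butlast ol)) (last ol)))"

definition adam_obs_strat :: "('q, 'a) mpg \<Rightarrow> ('q set list \<Rightarrow> 'a list \<Rightarrow> 'a \<Rightarrow> 'q set) \<Rightarrow> bool" where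
  "adam_obs_strat G str \<longleftrightarrow> (\<forall>ol al \<sigma>. is_pref G ol al \<and> \<sigma> \<in> acts G \<longrightarrow>
     str ol al \<sigma> \<in> obs G \<and> str ol al \<sigma> \<inter> post G \<sigma> (last ol) \<noteq> {})"

definition adam_cons_play :: "('q set list \<Rightarrow> 'a list \<Rightarrow> 'a \<Rightarrow> 'q set) \<Rightarrow> (nat \<Rightarrow> 'q set) \<Rightarrow> (nat \<Rightarrow> 'a) \<Rightarrow> bool" where
  "adam_cons_play str os as \<longleftrightarrow>
     (\<forall>n. os (Suc n) = str (map os [0..<Suc n]) (map as [0..<n]) (as n))"

definition adam_winning_obs :: "('q, 'a) mpg \<Rightarrow> ('q set list \<Rightarrow> 'a list \<Rightarrow> 'a \<Rightarrow> 'q set) \<Rightarrow> bool" where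
  "adam_winning_obs G str \<longleftrightarrow> adam_obs_strat G str \<and>
     (\<forall>os as. is_play G os as \<and> adam_cons_play str os as \<longrightarrow> \<not> eve_wins_play G os as)"

definition adam_finite_mem :: "('q, 'a) mpg \<Rightarrow> ('q set list \<Rightarrow> 'a list \<Rightarrow> 'a \<Rightarrow> 'q set) \<Rightarrow> bool" where
  "adam_finite_mem G str \<longleftrightarrow>
     (\<exists>(M :: nat set) m0 (\<alpha>u :: nat \<Rightarrow> 'q set \<Rightarrow> 'a \<Rightarrow> nat) (\<alpha>o :: nat \<Rightarrow> 'q set \<Rightarrow> 'a \<Rightarrow> 'q set).
        finite M \<and> m0 \<in> M \<and>
        (\<forall>m\<in>M. \<forall>ob\<in>obs G. \<forall>\<sigma>\<in>acts G. \<alpha>u m ob \<sigma> \<in> M \<and> \<alpha>o m ob \<sigma> \<in> obs G) \<and>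
        (\<forall>ol al \<sigma>. is_pref G ol al \<and> \<sigma> \<in> acts G \<longrightarrow>
           str ol al \<sigma> = \<alpha>o (foldl (\<lambda>m (ob, \<sigma>'). \<alpha>u m ob \<sigma>') m0 (zip (butlast ol) al)) (last ol) \<sigma>))"

datatype val = Fin int | PInf | Bot

fun vadd :: "val \<Rightarrow> int \<Rightarrow> val" where
  "vadd (Fin a) k = Fin (a + k)"
| "vadd PInf k = PInf"
| "vadd Bot k = Bot"

fun vle :: "val \<Rightarrow> val \<Rightarrow> bool" where
  "vle (Fin a) (Fin b) = (a \<le> b)"
| "vle _ PInf = True"
| "vle _ _ = False"

definition vmin :: "val set \<Rightarrow> val" where
  "vmin S = (if \<exists>k. Fin k \<in> S then Fin (Min {k. Fin k \<in> S}) else PInf)"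

definition supp :: "('q \<Rightarrow> val) \<Rightarrow> 'q set" where
  "supp f = {q. f q \<noteq> Bot}"

definition fsucc :: "('q, 'a) mpg \<Rightarrow> ('q \<Rightarrow> val) \<Rightarrow> 'a \<Rightarrow> ('q \<Rightarrow> val) \<Rightarrow> bool" where
  "fsucc G f \<sigma> f' \<longleftrightarrow> supp f' \<in> obs G \<and> supp f' \<subseteq> post G \<sigma> (supp f) \<and>
     (\<forall>q\<in>supp f'.
        f' q = vmin {vadd (f q') (weight G q' \<sigma> q) | q'. q' \<in> supp f \<and> (q', \<sigma>, q) \<in> trans G}
        \<or> f' q = PInf)"

definition fprec :: "nat \<Rightarrow> ('q \<Rightarrow> val) \<Rightarrow> ('q \<Rightarrow> val) \<Rightarrow> bool" where
  "fprec k f f' \<longleftrightarrow> supp f = supp f' \<and> (\<forall>q\<in>supp f. vle (vadd (f q) (int k)) (f' q))"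

definition fI :: "('q, 'a) mpg \<Rightarrow> 'q \<Rightarrow> val" where
  "fI G = (\<lambda>q. if q = init G then Fin 0 else Bot)"

text \<open>A sequence f_0 sigma_0 f_1 ... sigma_{n-1} f_n is a pair (fs, ss) with
  length fs = n+1 and length ss = n.\<close>
definition in_Pi :: "('q, 'a) mpg \<Rightarrow> ('q \<Rightarrow> val) list \<Rightarrow> 'a list \<Rightarrow> bool" where
  "in_Pi G fs ss \<longleftrightarrow> length fs = Suc (length ss) \<and> fs ! 0 = fI G \<and>
     (\<forall>i<length ss. fsucc G (fs ! i) (ss ! i) (fs ! Suc i)) \<and>
     (\<forall>i j. i < j \<and> j < length ss \<longrightarrow>
        \<not> fprec 0 (fs ! i) (fs ! j) \<and> \<not> fprec 1 (fs ! j) (fs ! i))"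

definition T_E :: "('q, 'a) mpg \<Rightarrow> ('q \<Rightarrow> val) list \<Rightarrow> 'a list \<Rightarrow> bool" where
  "T_E G fs ss \<longleftrightarrow> in_Pi G fs ss \<and>
     (\<exists>i<length ss. fprec 0 (fs ! i) (fs ! length ss))"

definition T_A :: "('q, 'a) mpg \<Rightarrow> ('q \<Rightarrow> val) list \<Rightarrow> 'a list \<Rightarrow> bool" where
  "T_A G fs ss \<longleftrightarrow> in_Pi G fs ss \<and>
     (\<exists>i<length ss. fprec 1 (fs ! length ss) (fs ! i) \<and> (\<exists>q\<in>supp (fs ! i). (fs ! i) q \<noteq> PInf))"

definition gam_hist :: "('q, 'a) mpg \<Rightarrow> ('q \<Rightarrow> val) list \<Rightarrow> 'a list \<Rightarrow> bool" where
  "gam_hist G fs ss \<longleftrightarrow> in_Pi G fs ss \<and> set ss \<subseteq> acts G \<and>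
     (\<forall>k<length ss. \<not> T_E G (take (Suc k) fs) (take k ss) \<and> \<not> T_A G (take (Suc k) fs) (take k ss))"

definition gam_eve_cons :: "(('q \<Rightarrow> val) list \<Rightarrow> 'a list \<Rightarrow> 'a) \<Rightarrow> ('q \<Rightarrow> val) list \<Rightarrow> 'a list \<Rightarrow> bool" where
  "gam_eve_cons s fs ss \<longleftrightarrow> (\<forall>k<length ss. ss ! k = s (take (Suc k) fs) (take k ss))"

definition gam_adam_cons :: "(('q \<Rightarrow> val) list \<Rightarrow> 'a list \<Rightarrow> 'a \<Rightarrow> ('q \<Rightarrow> val)) \<Rightarrow> ('q \<Rightarrow> val) list \<Rightarrow> 'a list \<Rightarrow> bool" where
  "gam_adam_cons s fs ss \<longleftrightarrow> (\<forall>k<length ss. fs ! Suc k = s (take (Suc k) fs) (take k ss) (ss ! k))"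

text \<open>Eve's strategy is winning in Gamma_G iff every play consistent with it reaches T_E:
  every consistent history that stops lies in T_E (not T_A), at every non-stopped consistent
  history Eve's choice is a legal action admitting a continuation, and there is no infinite
  consistent play that never stops.\<close>
definition gamma_eve_winning :: "('q, 'a) mpg \<Rightarrow> (('q \<Rightarrow> val) list \<Rightarrow> 'a list \<Rightarrow> 'a) \<Rightarrow> bool" where
  "gamma_eve_winning G s \<longleftrightarrow>
     (\<forall>fs ss. gam_hist G fs ss \<and> gam_eve_cons s fs ss \<longrightarrow>
        \<not> T_A G fs ss \<and>
        (\<not> T_E G fs ss \<longrightarrow> s fs ss \<in> acts G \<and> (\<exists>f. in_Pi G (fs @ [f]) (ss @ [s fs ss])))) \<and>
     \<not> (\<exists>F S. \<forall>n. gam_hist G (map F [0..<Suc n]) (map S [0..<n]) \<and>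
                  gam_eve_cons s (map F [0..<Suc n]) (map S [0..<n]))"

definition gamma_adam_winning :: "('q, 'a) mpg \<Rightarrow> (('q \<Rightarrow> val) list \<Rightarrow> 'a list \<Rightarrow> 'a \<Rightarrow> ('q \<Rightarrow> val)) \<Rightarrow> bool" where
  "gamma_adam_winning G s \<longleftrightarrow>
     (\<forall>fs ss. gam_hist G fs ss \<and> gam_adam_cons s fs ss \<longrightarrow>
        \<not> T_E G fs ss \<and>
        (\<not> T_A G fs ss \<longrightarrow> (\<forall>\<sigma>\<in>acts G. in_Pi G (fs @ [s fs ss \<sigma>]) (ss @ [\<sigma>])))) \<and>
     \<not> (\<exists>F S. \<forall>n. gam_hist G (map F [0..<Suc n]) (map S [0..<n]) \<and>
                  gam_adam_cons s (map F [0..<Suc n]) (map S [0..<n]))"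

end

theory Submission
  imports Defs "HOL-Library.FuncSet"
begin

lemma vadd0[simp]: "vadd x 0 = x" by (cases x) auto

lemma vle_trans: "vle a b \<Longrightarrow> vle b c \<Longrightarrow> vle a c"
  by (cases a; cases b; cases c) auto

lemma vle_PInf[simp]: "vle x PInf" by (cases x) auto

lemma vle_Fin_right: "vle x (Fin b) \<longleftrightarrow> (\<exists>a. x = Fin a \<and> a \<le> b)"
  by (cases x) auto

lemma vadd_add: "vadd (vadd x a) b = vadd x (a + b)" by (cases x) auto

lemma vmin_not_Bot[simp]: "vmin S \<noteq> Bot" by (simp add: vmin_def)

lemma vmin_le:
  assumes "finite S" "x \<in> S" "vle x y"
  shows "vle (vmin S) y"
proof (cases y)
  case (Fin b)
  then obtain a where a: "x = Fin a" "a \<le> b" using assms(3) vle_Fin_right by blast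
  have fin: "finite {k. Fin k \<in> S}"
  proof -
    have "{k. Fin k \<in> S} \<subseteq> (\<lambda>v. case v of Fin k \<Rightarrow> k | _ \<Rightarrow> 0) ` S"
      by (force)
    then show ?thesis using assms(1) finite_surj by blast
  qed
  have "Min {k. Fin k \<in> S} \<le> a" using fin a assms(2) by (auto intro: Min_le)
  then show ?thesis using a Fin assms(2) by (auto simp: vmin_def)
next
  case PInf then show ?thesis by simp
next
  case Bot then show ?thesis using assms(3) by (cases x) auto
qed

lemma vmin_Fin:
  assumes "finite S" "vmin S = Fin b"
  shows "Fin b \<in> S"
proof -
  have fin: "finite {k. Fin k \<in> S}"
  proof -
    have "{k. Fin k \<in> S} \<subseteq> (\<lambda>v. case v of Fin k \<Rightarrow> k | _ \<Rightarrow> 0) ` S"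
      by (force)
    then show ?thesis using assms(1) finite_surj by blast
  qed
  have ex: "\<exists>k. Fin k \<in> S" using assms(2) by (auto simp: vmin_def split: if_splits)
  then have "b = Min {k. Fin k \<in> S}" using assms(2) by (auto simp: vmin_def)
  moreover have "Min {k. Fin k \<in> S} \<in> {k. Fin k \<in> S}" using fin ex by (intro Min_in) auto
  ultimately show ?thesis by simp
qed

lemma prefix_closed_app:
  assumes "\<forall>xs x. xs @ [x] \<in> T \<longrightarrow> xs \<in> T"
  shows "xs @ zs \<in> T \<Longrightarrow> xs \<in> T"
proof (induction zs rule: rev_induct)
  case Nil then show ?case by simp
next
  case (snoc z zs)
  then show ?case using assms by (metis append_assoc)
qed

lemma koenig:
  fixes T :: "'x list set"
  assumes nil: "[] \<in> T" and pc: "\<forall>xs x. xs @ [x] \<in> T \<longrightarrow> xs \<in> T"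
    and fb: "\<forall>xs. finite {x. xs @ [x] \<in> T}" and inf: "infinite T"
  shows "\<exists>g. \<forall>n. map g [0..<n] \<in> T"
proof -
  define D where "D xs = {ys \<in> T. \<exists>zs. ys = xs @ zs}" for xs
  have step: "\<exists>x. xs @ [x] \<in> T \<and> infinite (D (xs @ [x]))" if "xs \<in> T" "infinite (D xs)" for xs
  proof (rule ccontr)
    assume "\<not> ?thesis"
    then have fin: "\<forall>x\<in>{x. xs @ [x] \<in> T}. finite (D (xs @ [x]))" by blast
    have "D xs \<subseteq> {xs} \<union> (\<Union>x\<in>{x. xs @ [x] \<in> T}. D (xs @ [x]))"
    proof
      fix ys assume "ys \<in> D xs"
      then obtain zs where ys: "ys \<in> T" "ys = xs @ zs" by (auto simp: D_def)
      show "ys \<in> {xs} \<union> (\<Union>x\<in>{x. xs @ [x] \<in> T}. D (xs @ [x]))"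
      proof (cases zs)
        case Nil then show ?thesis using ys by simp
      next
        case (Cons z zs')
        then have "(xs @ [z]) @ zs' \<in> T" using ys by simp
        then have "xs @ [z] \<in> T" using prefix_closed_app[OF pc] by blast
        moreover have "ys \<in> D (xs @ [z])" using ys Cons by (auto simp: D_def)
        ultimately show ?thesis by blast
      qed
    qed
    moreover have "finite ({xs} \<union> (\<Union>x\<in>{x. xs @ [x] \<in> T}. D (xs @ [x])))"
      using fin fb by auto
    ultimately show False using that(2) finite_subset by blast
  qed
  define nx where "nx xs = (SOME x. xs @ [x] \<in> T \<and> infinite (D (xs @ [x])))" for xs
  define c where "c n = rec_nat [] (\<lambda>_ xs. xs @ [nx xs]) n" for n
  have c0: "c 0 = []" and cS: "c (Suc n) = c n @ [nx (c n)]" for n by (simp_all add: c_def)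
  have inv: "c n \<in> T \<and> infinite (D (c n)) \<and> length (c n) = n" for n
  proof (induction n)
    case 0
    have "D [] = T" by (auto simp: D_def)
    then show ?case using nil inf c0 by simp
  next
    case (Suc n)
    then have "c n @ [nx (c n)] \<in> T \<and> infinite (D (c n @ [nx (c n)]))"
      unfolding nx_def using step[of "c n"] by (metis (mono_tags, lifting) someI_ex)
    then show ?case using Suc cS by simp
  qed
  define g where "g n = c (Suc n) ! n" for n
  have "map g [0..<n] = c n" for n
  proof (induction n)
    case 0 then show ?case by (simp add: c0)
  next
    case (Suc n)
    have "g n = nx (c n)" using inv[of n] by (simp add: g_def cS nth_append)
    then show ?case using Suc by (simp add: cS)
  qed
  then show ?thesis using inv by metis
qed


lemma in_Pi_take:
  assumes "in_Pi G fs ss" "k \<le> length ss"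
  shows "in_Pi G (take (Suc k) fs) (take k ss)"
  using assms unfolding in_Pi_def by (auto simp: min_def)

lemma gam_hist_take:
  assumes "gam_hist G fs ss" "k \<le> length ss"
  shows "gam_hist G (take (Suc k) fs) (take k ss)"
proof -
  have "set (take k ss) \<subseteq> acts G" using assms set_take_subset unfolding gam_hist_def by fastforce
  moreover have "in_Pi G (take (Suc k) fs) (take k ss)" using assms in_Pi_take unfolding gam_hist_def by blast
  moreover have "\<forall>j<length (take k ss). \<not> T_E G (take (Suc j) (take (Suc k) fs)) (take j (take k ss)) \<and>
       \<not> T_A G (take (Suc j) (take (Suc k) fs)) (take j (take k ss))"
    using assms unfolding gam_hist_def by (auto simp: min_def)
  ultimately show ?thesis unfolding gam_hist_def by blast
qed

lemma gam_eve_cons_take: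
  assumes "gam_eve_cons s fs ss" "k \<le> length ss"
  shows "gam_eve_cons s (take (Suc k) fs) (take k ss)"
  using assms unfolding gam_eve_cons_def by (auto simp: min_def)

lemma gam_adam_cons_take:
  assumes "gam_adam_cons s fs ss" "k \<le> length ss" "length fs = Suc (length ss)"
  shows "gam_adam_cons s (take (Suc k) fs) (take k ss)"
  using assms unfolding gam_adam_cons_def by (auto simp: min_def)

lemma last_len: "length fs = Suc n \<Longrightarrow> last fs = fs ! n"
  by (metis diff_Suc_1 last_conv_nth list.size(3) nat.distinct(1))

lemma in_Pi_fsucc:
  assumes "in_Pi G fs ss" "i < length ss"
  shows "fsucc G (fs ! i) (ss ! i) (fs ! Suc i)"
  using assms unfolding in_Pi_def by blast

lemma in_Pi_last_fsucc:
  assumes "in_Pi G (fs @ [f]) (ss @ [\<sigma>])"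
  shows "fsucc G (last fs) \<sigma> f"
proof -
  have l: "length fs = Suc (length ss)" using assms unfolding in_Pi_def by simp
  have "fsucc G ((fs @ [f]) ! length ss) ((ss @ [\<sigma>]) ! length ss) ((fs @ [f]) ! Suc (length ss))"
    using in_Pi_fsucc[OF assms, of "length ss"] by simp
  moreover have "last fs = fs ! length ss" using l by (rule last_len)
  ultimately show ?thesis using l by (simp add: nth_append)
qed

lemma in_Pi_snoc_replace:
  assumes "in_Pi G (fs @ [f]) (ss @ [\<sigma>])" "fsucc G (last fs) \<sigma> f'"
  shows "in_Pi G (fs @ [f']) (ss @ [\<sigma>])"
proof -
  have l: "length fs = Suc (length ss)" using assms unfolding in_Pi_def by simp
  have lf: "last fs = fs ! length ss" using l by (rule last_len)
  have A: "\<forall>i<length (ss @ [\<sigma>]). fsucc G ((fs @ [f']) ! i) ((ss @ [\<sigma>]) ! i) ((fs @ [f']) ! Suc i)"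
  proof (intro allI impI)
    fix i assume i: "i < length (ss @ [\<sigma>])"
    show "fsucc G ((fs @ [f']) ! i) ((ss @ [\<sigma>]) ! i) ((fs @ [f']) ! Suc i)"
    proof (cases "i = length ss")
      case True then show ?thesis using assms(2) l lf by (simp add: nth_append)
    next
      case False
      then have "i < length ss" using i by simp
      then show ?thesis using in_Pi_fsucc[OF assms(1), of i] l by (simp add: nth_append)
    qed
  qed
  have B: "\<forall>i j. i < j \<and> j < length (ss @ [\<sigma>]) \<longrightarrow>
        \<not> fprec 0 ((fs @ [f']) ! i) ((fs @ [f']) ! j) \<and> \<not> fprec 1 ((fs @ [f']) ! j) ((fs @ [f']) ! i)"
  proof (intro allI impI)
    fix i j assume ij: "i < j \<and> j < length (ss @ [\<sigma>])"
    then have "(fs @ [f']) ! i = (fs @ [f]) ! i" "(fs @ [f']) ! j = (fs @ [f]) ! j" using l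
      by (auto simp: nth_append)
    then show "\<not> fprec 0 ((fs @ [f']) ! i) ((fs @ [f']) ! j) \<and> \<not> fprec 1 ((fs @ [f']) ! j) ((fs @ [f']) ! i)"
      using assms(1) ij unfolding in_Pi_def by metis
  qed
  have "(fs @ [f']) ! 0 = fI G" using assms(1) l unfolding in_Pi_def by (simp add: nth_append)
  then show ?thesis using A B l unfolding in_Pi_def by simp
qed

lemma hist_finite:
  fixes H :: "('f list \<times> 's list) set"
  assumes wf: "\<forall>(fs,ss)\<in>H. length fs = Suc (length ss) \<and> fs ! 0 = f0"
    and pc: "\<forall>(fs,ss)\<in>H. \<forall>k\<le>length ss. (take (Suc k) fs, take k ss) \<in> H"
    and fb: "\<forall>(fs,ss)\<in>H. finite {(\<sigma>,f). (fs @ [f], ss @ [\<sigma>]) \<in> H}"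
    and ni: "\<not> (\<exists>F S. \<forall>n. (map F [0..<Suc n], map S [0..<n]) \<in> H)"
  shows "finite H"
proof (rule ccontr)
  assume infH: "infinite H"
  define h where "h xs = (f0 # map snd xs, map fst xs)" for xs :: "('s \<times> 'f) list"
  define T where "T = {xs. h xs \<in> H}"
  have sub: "H \<subseteq> h ` T"
  proof
    fix x assume x: "x \<in> H"
    obtain fs ss where x2: "x = (fs, ss)" by (cases x)
    have l: "length fs = Suc (length ss)" "fs ! 0 = f0" using wf x x2 by auto
    then obtain fs' where fs: "fs = f0 # fs'" by (cases fs) auto
    have "length fs' = length ss" using l fs by simp
    then have "h (zip ss fs') = x" using x2 fs by (simp add: h_def)
    then show "x \<in> h ` T" using x T_def by (metis (mono_tags, lifting) image_eqI mem_Collect_eq)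
  qed
  have infT: "infinite T" using infH sub finite_surj by blast
  obtain x0 where "x0 \<in> H" using infH by (metis ex_in_conv finite.emptyI)
  then obtain fs ss where fsss: "(fs,ss) \<in> H" by (cases x0) auto
  then have "(take 1 fs, take 0 ss) \<in> H" using pc by fastforce
  moreover have "take 1 fs = [f0]" using wf fsss by (cases fs) auto
  ultimately have nil: "[] \<in> T" by (simp add: T_def h_def)
  have pcT: "\<forall>xs x. xs @ [x] \<in> T \<longrightarrow> xs \<in> T"
  proof (intro allI impI)
    fix xs x assume "xs @ [x] \<in> T"
    then have hx: "h (xs @ [x]) \<in> H" by (simp add: T_def)
    have "length xs \<le> length (snd (h (xs@[x])))" by (simp add: h_def)
    then have "(take (Suc (length xs)) (fst (h (xs@[x]))), take (length xs) (snd (h (xs@[x])))) \<in> H"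
      using pc hx by (metis (no_types, lifting) case_prod_conv prod.collapse)
    then show "xs \<in> T" by (simp add: T_def h_def)
  qed
  have fbT: "\<forall>xs. finite {x. xs @ [x] \<in> T}"
  proof
    fix xs
    show "finite {x. xs @ [x] \<in> T}"
    proof (cases "xs \<in> T")
      case False
      then have e: "{x. xs @ [x] \<in> T} = {}" using pcT by blast
      show ?thesis by (subst e) (rule finite.emptyI)
    next
      case True
      then have "finite {(\<sigma>,f). (fst (h xs) @ [f], snd (h xs) @ [\<sigma>]) \<in> H}"
        using fb by (auto simp: T_def)
      moreover have "{x. xs @ [x] \<in> T} = {(\<sigma>,f). (fst (h xs) @ [f], snd (h xs) @ [\<sigma>]) \<in> H}"
        by (auto simp: T_def h_def)
      ultimately show ?thesis by simp
    qed
  qed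
  obtain g where g: "\<forall>n. map g [0..<n] \<in> T" using koenig[OF nil pcT fbT infT] by blast
  define F where "F n = (if n = 0 then f0 else snd (g (n - 1)))" for n
  define S where "S n = fst (g n)" for n
  have "map F [0..<Suc n] = f0 # map snd (map g [0..<n])" for n
  proof -
    have "map F [0..<Suc n] = F 0 # map (\<lambda>i. F (Suc i)) [0..<n]"
      by (simp add: map_upt_Suc del: upt_Suc)
    then show ?thesis by (simp add: F_def)
  qed
  moreover have "map S [0..<n] = map fst (map g [0..<n])" for n by (simp add: S_def[abs_def] comp_def)
  ultimately have "\<forall>n. (map F [0..<Suc n], map S [0..<n]) \<in> H" using g by (simp only: T_def h_def mem_Collect_eq) simp
  then show False using ni by blast
qed


lemma lo_D:
  assumes "mpg_lo G"
  shows lo_fin_states: "finite (states G)" and lo_init: "init G \<in> states G"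
    and lo_fin_acts: "finite (acts G)" and lo_acts_ne: "acts G \<noteq> {}"
    and lo_trans: "trans G \<subseteq> states G \<times> acts G \<times> states G"
    and lo_total: "\<forall>q\<in>states G. \<forall>\<sigma>\<in>acts G. \<exists>q'. (q, \<sigma>, q') \<in> trans G"
    and lo_obs1: "\<forall>ob\<in>obs G. ob \<noteq> {} \<and> ob \<subseteq> states G"
    and lo_cover: "\<Union>(obs G) = states G"
    and lo_disj: "\<forall>o1\<in>obs G. \<forall>o2\<in>obs G. o1 \<noteq> o2 \<longrightarrow> o1 \<inter> o2 = {}"
    and lo_initobs: "{init G} \<in> obs G"
    and lo_postu: "\<forall>ob\<in>obs G. \<forall>\<sigma>\<in>acts G. \<exists>S\<subseteq>obs G. post G \<sigma> ob = \<Union>S"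
  using assms unfolding mpg_lo_def by simp_all


lemma lo_obs: "mpg_lo G \<Longrightarrow> ob \<in> obs G \<Longrightarrow> ob \<subseteq> states G \<and> ob \<noteq> {}"
  using lo_obs1[of G] by blast

lemma lo_finite_obs: "mpg_lo G \<Longrightarrow> finite (obs G)"
proof -
  assume a: "mpg_lo G"
  then have "obs G \<subseteq> Pow (states G)" using lo_obs1[OF a] by blast
  moreover have "finite (states G)" using lo_fin_states[OF a] by blast
  ultimately show ?thesis by (meson finite_Pow_iff finite_subset)
qed

lemma lo_obs_eq:
  "mpg_lo G \<Longrightarrow> o1 \<in> obs G \<Longrightarrow> o2 \<in> obs G \<Longrightarrow> q \<in> o1 \<Longrightarrow> q \<in> o2 \<Longrightarrow> o1 = o2"
proof (rule ccontr)
  assume "mpg_lo G" "o1 \<in> obs G" "o2 \<in> obs G" "q \<in> o1" "q \<in> o2" "o1 \<noteq> o2"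
  then have "o1 \<inter> o2 = {}" using lo_disj[of G] by blast
  then show False using \<open>q \<in> o1\<close> \<open>q \<in> o2\<close> by blast
qed

lemma lo_post_obs:
  assumes "mpg_lo G" "ob \<in> obs G" "\<sigma> \<in> acts G" "q' \<in> post G \<sigma> ob"
  shows "\<exists>o'\<in>obs G. q' \<in> o' \<and> o' \<subseteq> post G \<sigma> ob"
proof -
  have "\<exists>S\<subseteq>obs G. post G \<sigma> ob = \<Union>S" using lo_postu[OF assms(1)] assms(2,3) by simp
  then obtain S where S: "S \<subseteq> obs G" "post G \<sigma> ob = \<Union>S" by blast
  have "q' \<in> \<Union>S" using assms(4) S(2) by simp
  then obtain o' where o': "o' \<in> S" "q' \<in> o'" by (rule UnionE)
  have "o' \<subseteq> post G \<sigma> ob" using o'(1) S(2) by (simp add: Union_upper)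
  then show ?thesis using o' S(1) by blast
qed

lemma play_post:
  assumes lo: "mpg_lo G" and p: "is_play G os as"
  shows "os (Suc i) \<subseteq> post G (as i) (os i)"
proof -
  have o: "os i \<in> obs G" "os (Suc i) \<in> obs G" "as i \<in> acts G" using p unfolding is_play_def by auto
  obtain q q' where qq: "q \<in> os i" "q' \<in> os (Suc i)" "(q, as i, q') \<in> trans G"
    using p unfolding is_play_def by blast
  then have "q' \<in> post G (as i) (os i)" unfolding post_def by blast
  then obtain o' where o': "o' \<in> obs G" "q' \<in> o'" "o' \<subseteq> post G (as i) (os i)"
    using lo_post_obs[OF lo o(1) o(3)] by blast
  then have "o' = os (Suc i)" using lo_obs_eq[OF lo o'(1) o(2)] qq by blast
  then show ?thesis using o' by simp
qed

lemma lo_junk: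
  assumes lo: "mpg_lo G" and "ob \<in> obs G" "\<sigma> \<in> acts G"
  shows "\<exists>o'\<in>obs G. o' \<inter> post G \<sigma> ob \<noteq> {}"
proof -
  obtain q where q: "q \<in> ob" using lo_obs[OF lo assms(2)] by blast
  then have "q \<in> states G" using lo_obs[OF lo assms(2)] by blast
  then obtain q' where "(q, \<sigma>, q') \<in> trans G" using lo_total[OF lo] assms(3) by blast
  then have "q' \<in> post G \<sigma> ob" using q unfolding post_def by blast
  then show ?thesis using lo_post_obs[OF lo assms(2,3)] by blast
qed

lemma pref_props:
  assumes "is_pref G ol al"
  shows "set ol \<subseteq> obs G \<and> set al \<subseteq> acts G \<and> length ol = Suc (length al)"
proof -
  obtain os as where p: "is_play G os as" "ol = map os [0..<Suc (length al)]" "al = map as [0..<length al]"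
    using assms unfolding is_pref_def by blast
  have "\<forall>i. os i \<in> obs G \<and> as i \<in> acts G" using p(1) unfolding is_play_def by blast
  then show ?thesis using p(2,3) by (metis (no_types, lifting) ex_map_conv length_map length_upt minus_nat.diff_0 subsetI)
qed

lemma play_pref:
  assumes "is_play G os as"
  shows "is_pref G (map os [0..<Suc n]) (map as [0..<n])"
  using assms unfolding is_pref_def by auto

definition emin :: "('q, 'a) mpg \<Rightarrow> ('q \<Rightarrow> val) \<Rightarrow> 'a \<Rightarrow> 'q set \<Rightarrow> 'q \<Rightarrow> val" where
  "emin G f \<sigma> ob = (\<lambda>q. if q \<in> ob then
     vmin {vadd (f q') (weight G q' \<sigma> q) | q'. q' \<in> supp f \<and> (q', \<sigma>, q) \<in> trans G} else Bot)"

lemma supp_emin[simp]: "supp (emin G f \<sigma> ob) = ob"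
  unfolding supp_def emin_def by auto

lemma fsucc_emin:
  assumes "ob \<in> obs G" "ob \<subseteq> post G \<sigma> (supp f)"
  shows "fsucc G f \<sigma> (emin G f \<sigma> ob)"
  unfolding fsucc_def supp_emin using assms by (simp add: emin_def)

lemma finite_preds:
  assumes "mpg_lo G"
  shows "finite {vadd (f q') (weight G q' \<sigma> q) | q'. q' \<in> supp f \<and> (q', \<sigma>, q) \<in> trans G}"
proof -
  have "{vadd (f q') (weight G q' \<sigma> q) | q'. q' \<in> supp f \<and> (q', \<sigma>, q) \<in> trans G}
     \<subseteq> (\<lambda>q'. vadd (f q') (weight G q' \<sigma> q)) ` states G"
    using lo_trans[OF assms] by blast
  moreover have "finite (states G)" using lo_fin_states[OF assms] by blast
  ultimately show ?thesis using finite_subset by blast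
qed

lemma fsucc_supp:
  "fsucc G f \<sigma> f' \<Longrightarrow> supp f' \<in> obs G \<and> supp f' \<subseteq> post G \<sigma> (supp f)"
  unfolding fsucc_def by blast

lemma finite_fsucc:
  assumes lo: "mpg_lo G"
  shows "finite {f'. fsucc G f \<sigma> f'}"
proof -
  define A where "A q = (if q \<in> states G then {Bot, PInf,
      vmin {vadd (f q') (weight G q' \<sigma> q) | q'. q' \<in> supp f \<and> (q', \<sigma>, q) \<in> trans G}} else {Bot})" for q
  define ext where "ext g = (\<lambda>q. if q \<in> states G then g q else Bot)" for g :: "'a \<Rightarrow> val"
  have "{f'. fsucc G f \<sigma> f'} \<subseteq> ext ` (PiE (states G) A)"
  proof
    fix f' assume "f' \<in> {f'. fsucc G f \<sigma> f'}"
    then have fs: "fsucc G f \<sigma> f'" by simp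
    have ss: "supp f' \<subseteq> states G" using fsucc_supp[OF fs] lo_obs[OF lo] by blast
    have "f' = ext (restrict f' (states G))"
    proof
      fix q show "f' q = ext (restrict f' (states G)) q"
        using ss by (auto simp: ext_def supp_def)
    qed
    moreover have "restrict f' (states G) \<in> PiE (states G) A"
    proof -
      have "f' q \<in> A q" if "q \<in> states G" for q
      proof (cases "q \<in> supp f'")
        case True then show ?thesis using fs that unfolding fsucc_def A_def by auto
      next
        case False then show ?thesis using that unfolding A_def supp_def by auto
      qed
      then show ?thesis by auto
    qed
    ultimately show "f' \<in> ext ` (PiE (states G) A)" by blast
  qed
  moreover have "finite (PiE (states G) A)"
    using lo_fin_states[OF lo] unfolding A_def by (intro finite_PiE) auto
  ultimately show ?thesis using finite_subset by blast
qed


lemma liminf_nonneg: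
  fixes X :: "nat \<Rightarrow> real"
  assumes "\<forall>n. b \<le> X n"
  shows "0 \<le> Liminf sequentially (\<lambda>n. ereal (X n / real n))"
proof -
  have lim: "(\<lambda>n. ereal (b / real n)) \<longlonglongrightarrow> ereal 0"
    using lim_const_over_n[of b] by simp
  have "Liminf sequentially (\<lambda>n. ereal (b / real n)) = 0"
    using lim_imp_Liminf[OF _ lim] by (simp add: zero_ereal_def)
  moreover have "eventually (\<lambda>n. ereal (b / real n) \<le> ereal (X n / real n)) sequentially"
  proof -
    have "b / real n \<le> X n / real n" if "n \<ge> 1" for n
      using assms that by (simp add: divide_right_mono)
    then show ?thesis by (auto simp: eventually_sequentially)
  qed
  ultimately show ?thesis using Liminf_mono by metis
qed

definition Heve :: "('q, 'a) mpg \<Rightarrow> (('q \<Rightarrow> val) list \<Rightarrow> 'a list \<Rightarrow> 'a) \<Rightarrow> (('q \<Rightarrow> val) list \<times> 'a list) set" where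
  "Heve G s = {(fs, ss). gam_hist G fs ss \<and> gam_eve_cons s fs ss}"

definition NS :: "('q, 'a) mpg \<Rightarrow> ('q \<Rightarrow> val) list \<Rightarrow> 'a list \<Rightarrow> bool" where
  "NS G fs ss \<longleftrightarrow> \<not> T_E G fs ss \<and> \<not> T_A G fs ss"

lemma heve_win:
  assumes "gamma_eve_winning G s" "(fs, ss) \<in> Heve G s"
  shows "\<not> T_A G fs ss \<and> (\<not> T_E G fs ss \<longrightarrow> s fs ss \<in> acts G \<and> (\<exists>f. in_Pi G (fs @ [f]) (ss @ [s fs ss])))"
  using assms unfolding gamma_eve_winning_def Heve_def by blast

lemma heve_len:
  assumes "(fs, ss) \<in> Heve G s"
  shows "length fs = Suc (length ss) \<and> fs ! 0 = fI G"
  using assms unfolding Heve_def gam_hist_def in_Pi_def by blast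

lemma heve_take:
  assumes "(fs, ss) \<in> Heve G s" "k \<le> length ss"
  shows "(take (Suc k) fs, take k ss) \<in> Heve G s"
  using assms gam_hist_take gam_eve_cons_take unfolding Heve_def by blast

lemma heve_take_NS:
  assumes "(fs, ss) \<in> Heve G s" "k < length ss"
  shows "NS G (take (Suc k) fs) (take k ss)"
  using assms unfolding Heve_def gam_hist_def NS_def by blast

lemma heve_ext:
  assumes W: "gamma_eve_winning G s" and h: "(fs, ss) \<in> Heve G s" and ns: "NS G fs ss"
    and fs: "fsucc G (last fs) (s fs ss) f'"
  shows "(fs @ [f'], ss @ [s fs ss]) \<in> Heve G s"
proof -
  have w: "s fs ss \<in> acts G" "\<exists>f. in_Pi G (fs @ [f]) (ss @ [s fs ss])"
    using heve_win[OF W h] ns unfolding NS_def by auto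
  have l: "length fs = Suc (length ss)" using heve_len[OF h] by blast
  have ip: "in_Pi G (fs @ [f']) (ss @ [s fs ss])" using w(2) in_Pi_snoc_replace[OF _ fs] by blast
  have gh: "gam_hist G fs ss" "gam_eve_cons s fs ss" using h unfolding Heve_def by auto
  have "set (ss @ [s fs ss]) \<subseteq> acts G" using gh w(1) unfolding gam_hist_def by auto
  moreover have "\<forall>k<length (ss @ [s fs ss]). \<not> T_E G (take (Suc k) (fs @ [f'])) (take k (ss @ [s fs ss])) \<and>
       \<not> T_A G (take (Suc k) (fs @ [f'])) (take k (ss @ [s fs ss]))"
  proof (intro allI impI)
    fix k assume k: "k < length (ss @ [s fs ss])"
    show "\<not> T_E G (take (Suc k) (fs @ [f'])) (take k (ss @ [s fs ss])) \<and>
       \<not> T_A G (take (Suc k) (fs @ [f'])) (take k (ss @ [s fs ss]))"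
    proof (cases "k = length ss")
      case True then show ?thesis using ns l unfolding NS_def by simp
    next
      case False then have "k < length ss" using k by simp
      then show ?thesis using gh l unfolding gam_hist_def by simp
    qed
  qed
  moreover have "gam_eve_cons s (fs @ [f']) (ss @ [s fs ss])"
    unfolding gam_eve_cons_def
  proof (intro allI impI)
    fix k assume k: "k < length (ss @ [s fs ss])"
    show "(ss @ [s fs ss]) ! k = s (take (Suc k) (fs @ [f'])) (take k (ss @ [s fs ss]))"
    proof (cases "k = length ss")
      case True then show ?thesis using l by (simp add: nth_append)
    next
      case False then have "k < length ss" using k by simp
      then show ?thesis using gh l unfolding gam_eve_cons_def by (simp add: nth_append)
    qed
  qed
  ultimately show ?thesis using ip unfolding Heve_def gam_hist_def by simp
qed

lemma heve_finite:
  assumes lo: "mpg_lo G" and W: "gamma_eve_winning G s"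
  shows "finite (Heve G s)"
proof (rule hist_finite[of "Heve G s" "fI G"])
  show "\<forall>(fs, ss)\<in>Heve G s. length fs = Suc (length ss) \<and> fs ! 0 = fI G" using heve_len by blast
  show "\<forall>(fs, ss)\<in>Heve G s. \<forall>k\<le>length ss. (take (Suc k) fs, take k ss) \<in> Heve G s" using heve_take by blast
  show "\<not> (\<exists>F S. \<forall>n. (map F [0..<Suc n], map S [0..<n]) \<in> Heve G s)"
    using W unfolding gamma_eve_winning_def Heve_def by blast
  show "\<forall>(fs, ss)\<in>Heve G s. finite {(\<sigma>, f). (fs @ [f], ss @ [\<sigma>]) \<in> Heve G s}"
  proof (intro ballI, clarify)
    fix fs ss assume h: "(fs, ss) \<in> Heve G s"
    have l: "length fs = Suc (length ss)" using heve_len[OF h] by blast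
    have "{(\<sigma>, f). (fs @ [f], ss @ [\<sigma>]) \<in> Heve G s} \<subseteq> {s fs ss} \<times> {f. fsucc G (last fs) (s fs ss) f}"
    proof
      fix x assume "x \<in> {(\<sigma>, f). (fs @ [f], ss @ [\<sigma>]) \<in> Heve G s}"
      then obtain \<sigma> f where x: "x = (\<sigma>, f)" and e: "(fs @ [f], ss @ [\<sigma>]) \<in> Heve G s" by blast
      then have "gam_eve_cons s (fs @ [f]) (ss @ [\<sigma>])" "in_Pi G (fs @ [f]) (ss @ [\<sigma>])"
        unfolding Heve_def gam_hist_def by auto
      then have "(ss @ [\<sigma>]) ! length ss = s (take (Suc (length ss)) (fs @ [f])) (take (length ss) (ss @ [\<sigma>]))"
        "fsucc G (last fs) \<sigma> f"
        unfolding gam_eve_cons_def using in_Pi_last_fsucc by auto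
      then show "x \<in> {s fs ss} \<times> {f. fsucc G (last fs) (s fs ss) f}" using l x by simp
    qed
    moreover have "finite ({s fs ss} \<times> {f. fsucc G (last fs) (s fs ss) f})"
      using finite_fsucc[OF lo] by simp
    ultimately show "finite {(\<sigma>, f). (fs @ [f], ss @ [\<sigma>]) \<in> Heve G s}" using finite_subset by blast
  qed
qed

lemma heve_init:
  assumes "gamma_eve_winning G s"
  shows "([fI G], []) \<in> Heve G s \<and> NS G [fI G] []"
  unfolding Heve_def gam_hist_def in_Pi_def gam_eve_cons_def NS_def T_E_def T_A_def by simp


datatype ('f, 'a) em = EStart | EJunk | ENode "'f list" "'a list"

definition eres :: "('q, 'a) mpg \<Rightarrow> ('q \<Rightarrow> val) list \<Rightarrow> 'a list \<Rightarrow> ('q \<Rightarrow> val, 'a) em" where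
  "eres G fs ss = (if T_E G fs ss then
     (let i = (SOME i. i < length ss \<and> fprec 0 (fs ! i) (fs ! length ss)) in ENode (take (Suc i) fs) (take i ss))
    else ENode fs ss)"

fun eupd :: "('q, 'a) mpg \<Rightarrow> (('q \<Rightarrow> val) list \<Rightarrow> 'a list \<Rightarrow> 'a) \<Rightarrow> ('q \<Rightarrow> val, 'a) em \<Rightarrow> 'q set \<Rightarrow> ('q \<Rightarrow> val, 'a) em" where
  "eupd G s EStart ob = (if ob = {init G} then ENode [fI G] [] else EJunk)"
| "eupd G s EJunk ob = EJunk"
| "eupd G s (ENode fs ss) ob = (if ob \<in> obs G \<and> ob \<subseteq> post G (s fs ss) (supp (last fs))
     then eres G (fs @ [emin G (last fs) (s fs ss) ob]) (ss @ [s fs ss]) else EJunk)"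

fun eact :: "'a \<Rightarrow> (('q \<Rightarrow> val) list \<Rightarrow> 'a list \<Rightarrow> 'a) \<Rightarrow> ('q \<Rightarrow> val, 'a) em \<Rightarrow> 'a" where
  "eact a0 s (ENode fs ss) = s fs ss"
| "eact a0 s EStart = a0"
| "eact a0 s EJunk = a0"

definition EM :: "('q, 'a) mpg \<Rightarrow> (('q \<Rightarrow> val) list \<Rightarrow> 'a list \<Rightarrow> 'a) \<Rightarrow> ('q \<Rightarrow> val, 'a) em set" where
  "EM G s = {EStart, EJunk} \<union> (\<lambda>(fs, ss). ENode fs ss) ` {h \<in> Heve G s. NS G (fst h) (snd h)}"

lemma EM_finite: "mpg_lo G \<Longrightarrow> gamma_eve_winning G s \<Longrightarrow> finite (EM G s)"
proof -
  assume a: "mpg_lo G" "gamma_eve_winning G s"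
  have "finite {h \<in> Heve G s. NS G (fst h) (snd h)}"
    using heve_finite[OF a] by (rule finite_subset[rotated]) auto
  then show ?thesis unfolding EM_def by simp
qed

lemma ENode_EM: "ENode fs ss \<in> EM G s \<longleftrightarrow> (fs, ss) \<in> Heve G s \<and> NS G fs ss"
  unfolding EM_def by force

lemma vle_refl: "x \<noteq> Bot \<Longrightarrow> vle x x" by (cases x) auto

lemma last_take_Suc: "i < length fs \<Longrightarrow> last (take (Suc i) fs) = fs ! i"
  by (simp add: last_len)

lemma eres_in:
  assumes W: "gamma_eve_winning G s" and h: "(fs, ss) \<in> Heve G s"
  shows "\<exists>fs' ss'. eres G fs ss = ENode fs' ss' \<and> (fs', ss') \<in> Heve G s \<and> NS G fs' ss' \<and>
     supp (last fs') = supp (last fs) \<and> (\<forall>q\<in>supp (last fs'). vle (last fs' q) (last fs q))"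
proof (cases "T_E G fs ss")
  case True
  define i where "i = (SOME i. i < length ss \<and> fprec 0 (fs ! i) (fs ! length ss))"
  have "\<exists>i. i < length ss \<and> fprec 0 (fs ! i) (fs ! length ss)" using True unfolding T_E_def by blast
  then have i: "i < length ss" "fprec 0 (fs ! i) (fs ! length ss)" unfolding i_def by (metis (mono_tags, lifting) someI_ex)+
  have l: "length fs = Suc (length ss)" using heve_len[OF h] by blast
  have e: "eres G fs ss = ENode (take (Suc i) fs) (take i ss)" using True unfolding eres_def i_def by (simp add: Let_def)
  have lt: "last (take (Suc i) fs) = fs ! i" using i l by (intro last_take_Suc) simp
  have lf: "last fs = fs ! length ss" using l by (rule last_len)
  show ?thesis
    using e heve_take[OF h less_imp_le[OF i(1)]] heve_take_NS[OF h i(1)] i(2) lt lf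
    unfolding fprec_def by auto
next
  case False
  then have "NS G fs ss" using heve_win[OF W h] unfolding NS_def by blast
  then show ?thesis using False h unfolding eres_def by (auto intro: vle_refl simp: supp_def)
qed


lemma eupd_EM:
  assumes lo: "mpg_lo G" and W: "gamma_eve_winning G s" and m: "m \<in> EM G s" and ob: "ob \<in> obs G"
  shows "eupd G s m ob \<in> EM G s"
proof (cases m)
  case EStart
  have "ENode [fI G] [] \<in> EM G s" using heve_init[OF W] ENode_EM by blast
  moreover have "EJunk \<in> EM G s" unfolding EM_def by simp
  ultimately show ?thesis using EStart by simp
next
  case EJunk
  have "EJunk \<in> EM G s" unfolding EM_def by simp
  then show ?thesis using EJunk by simp
next
  case (ENode fs ss)
  then have h: "(fs, ss) \<in> Heve G s" "NS G fs ss" using m ENode_EM by blast+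
  show ?thesis
  proof (cases "ob \<in> obs G \<and> ob \<subseteq> post G (s fs ss) (supp (last fs))")
    case True
    have "fsucc G (last fs) (s fs ss) (emin G (last fs) (s fs ss) ob)" using fsucc_emin[OF conjunct1[OF True] conjunct2[OF True]] .
    then have e: "(fs @ [emin G (last fs) (s fs ss) ob], ss @ [s fs ss]) \<in> Heve G s"
      by (rule heve_ext[OF W h])
    obtain fs' ss' where r: "eres G (fs @ [emin G (last fs) (s fs ss) ob]) (ss @ [s fs ss]) = ENode fs' ss'"
      "(fs', ss') \<in> Heve G s" "NS G fs' ss'" using eres_in[OF W e] by blast
    have "ENode fs' ss' \<in> EM G s" using r(2,3) ENode_EM by blast
    moreover have "eupd G s m ob = ENode fs' ss'" using True ENode r(1) by (simp only: eupd.simps if_True simp_thms)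
    ultimately show ?thesis by simp
  next
    case False
    have "EJunk \<in> EM G s" unfolding EM_def by simp
    moreover have "eupd G s m ob = EJunk" using False ENode by (simp only: eupd.simps if_False)
    ultimately show ?thesis by simp
  qed
qed

lemma eact_acts:
  assumes W: "gamma_eve_winning G s" and a0: "a0 \<in> acts G" and m: "m \<in> EM G s"
  shows "eact a0 s m \<in> acts G"
proof (cases m)
  case (ENode fs ss)
  then have h: "(fs, ss) \<in> Heve G s" "NS G fs ss" using m ENode_EM by blast+
  then show ?thesis using heve_win[OF W h(1)] ENode unfolding NS_def by simp
qed (use a0 in simp_all)

lemma vle_vadd_Fin: "vle x (Fin S) \<Longrightarrow> vle (vadd x w) (Fin (S + w))"
  by (cases x) auto

lemma eve_play:
  assumes lo: "mpg_lo G" and W: "gamma_eve_winning G s" and p: "is_play G os as"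
    and cons: "\<forall>n. as n = eact a0 s (foldl (eupd G s) EStart (map os [0..<Suc n]))"
    and c: "is_concrete G os as qs"
  shows "\<exists>fs ss. foldl (eupd G s) EStart (map os [0..<Suc n]) = ENode fs ss \<and> (fs, ss) \<in> Heve G s \<and>
     NS G fs ss \<and> supp (last fs) = os n \<and>
     vle (last fs (qs n)) (Fin (\<Sum>i<n. weight G (qs i) (as i) (qs (Suc i))))"
proof (induction n)
  case 0
  have "os 0 = {init G}" using p unfolding is_play_def by blast
  moreover have "qs 0 \<in> os 0" using c unfolding is_concrete_def by blast
  ultimately show ?case using heve_init[OF W] by (simp add: fI_def supp_def)
next
  case (Suc n)
  then obtain fs ss where IH: "foldl (eupd G s) EStart (map os [0..<Suc n]) = ENode fs ss"
    "(fs, ss) \<in> Heve G s" "NS G fs ss" "supp (last fs) = os n"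
    "vle (last fs (qs n)) (Fin (\<Sum>i<n. weight G (qs i) (as i) (qs (Suc i))))" by blast
  define \<sigma> where "\<sigma> = s fs ss"
  have sig: "as n = \<sigma>" using cons IH(1) by (simp add: \<sigma>_def)
  define ob where "ob = os (Suc n)"
  have ob: "ob \<in> obs G" "ob \<subseteq> post G \<sigma> (supp (last fs))"
  proof -
    show "ob \<in> obs G" using p unfolding is_play_def ob_def by blast
    show "ob \<subseteq> post G \<sigma> (supp (last fs))" using play_post[OF lo p, of n] by (simp only: ob_def IH(4) sig)
  qed
  define f' where "f' = emin G (last fs) \<sigma> ob"
  have fsu: "fsucc G (last fs) \<sigma> f'" unfolding f'_def by (rule fsucc_emin[OF ob(1) ob(2)])
  have ext: "(fs @ [f'], ss @ [\<sigma>]) \<in> Heve G s" using fsu unfolding \<sigma>_def by (rule heve_ext[OF W IH(2,3)])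
  obtain fs' ss' where R: "eres G (fs @ [f']) (ss @ [\<sigma>]) = ENode fs' ss'" "(fs', ss') \<in> Heve G s"
    "NS G fs' ss'" "supp (last fs') = supp (last (fs @ [f']))" "\<forall>q\<in>supp (last fs'). vle (last fs' q) (last (fs @ [f']) q)"
    using eres_in[OF W ext] by blast
  have lsn: "last (fs @ [f']) = f'" by simp
  have step: "foldl (eupd G s) EStart (map os [0..<Suc (Suc n)]) = ENode fs' ss'"
  proof -
    have "foldl (eupd G s) EStart (map os [0..<Suc (Suc n)]) = eupd G s (foldl (eupd G s) EStart (map os [0..<Suc n])) (os (Suc n))"
      by simp
    also have "\<dots> = eupd G s (ENode fs ss) ob" by (simp only: IH(1) ob_def)
    also have "\<dots> = eres G (fs @ [f']) (ss @ [\<sigma>])"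
      by (simp only: eupd.simps if_P[OF conjI[OF ob(1) ob(2)[unfolded \<sigma>_def]]] f'_def \<sigma>_def)
    finally show ?thesis using R(1) by simp
  qed
  have sf: "supp (last fs') = os (Suc n)" using R(4) unfolding lsn f'_def ob_def by simp
  define q where "q = qs (Suc n)"
  have q: "q \<in> ob" "qs n \<in> supp (last fs)" "(qs n, \<sigma>, q) \<in> trans G"
  proof -
    have c1: "qs i \<in> os i" "(qs i, as i, qs (Suc i)) \<in> trans G" for i using c unfolding is_concrete_def by blast+
    show "q \<in> ob" using c1(1)[of "Suc n"] unfolding q_def ob_def .
    show "qs n \<in> supp (last fs)" using c1(1)[of n] IH(4) by simp
    show "(qs n, \<sigma>, q) \<in> trans G" using c1(2)[of n] sig unfolding q_def by simp
  qed
  define S where "S = (\<Sum>i<n. weight G (qs i) (as i) (qs (Suc i)))"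
  define w where "w = weight G (qs n) \<sigma> q"
  have "vle (vadd (last fs (qs n)) w) (Fin (S + w))" using IH(5) vle_vadd_Fin S_def by blast
  moreover have "vadd (last fs (qs n)) w \<in> {vadd (last fs q') (weight G q' \<sigma> q) | q'. q' \<in> supp (last fs) \<and> (q', \<sigma>, q) \<in> trans G}"
    using q unfolding w_def by blast
  ultimately have "vle (f' q) (Fin (S + w))" using vmin_le[OF finite_preds[OF lo]] q(1)
    unfolding f'_def emin_def by simp
  moreover have "vle (last fs' q) (f' q)" using R(5) sf q(1) unfolding lsn ob_def q_def by simp
  ultimately have "vle (last fs' q) (Fin (S + w))" using vle_trans by blast
  moreover have "S + w = (\<Sum>i<Suc n. weight G (qs i) (as i) (qs (Suc i)))"
    unfolding S_def w_def q_def using sig by simp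
  ultimately show ?case using step R(2,3) sf unfolding q_def by auto
qed


lemma eve_part:
  fixes G :: "('q, 'a) mpg"
  assumes lo: "mpg_lo G" and W: "gamma_eve_winning G s"
  shows "\<exists>str. eve_winning_obs G str \<and> eve_finite_mem G str"
proof -
  obtain a0 where a0: "a0 \<in> acts G" using lo_acts_ne[OF lo] by blast
  have finEM: "finite (EM G s)" by (rule EM_finite[OF lo W])
  obtain enc :: "('q \<Rightarrow> val, 'a) em \<Rightarrow> nat" and N where enc: "enc ` EM G s = {i. i < N}" "inj_on enc (EM G s)"
    using finite_imp_inj_to_nat_seg[OF finEM] by blast
  define dec where "dec = inv_into (EM G s) enc"
  have dec: "m \<in> EM G s \<Longrightarrow> dec (enc m) = m" for m using enc(2) by (simp add: dec_def)
  define au where "au i ob = enc (eupd G s (dec i) ob)" for i ob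
  define ao where "ao i ob = eact a0 s (eupd G s (dec i) ob)" for i ob
  define m0 where "m0 = enc EStart"
  define str where "str ol al = ao (foldl au m0 (butlast ol)) (last ol)" for ol :: "'q set list" and al :: "'a list"
  have EStartEM: "EStart \<in> EM G s" by (simp add: EM_def)
  have fold: "foldl au (enc m) obl = enc (foldl (eupd G s) m obl) \<and> foldl (eupd G s) m obl \<in> EM G s"
    if "set obl \<subseteq> obs G" "m \<in> EM G s" for obl m
    using that
  proof (induction obl arbitrary: m)
    case Nil then show ?case by simp
  next
    case (Cons x xs)
    have x: "x \<in> obs G" "set xs \<subseteq> obs G" using Cons.prems by auto
    have e: "eupd G s m x \<in> EM G s" using eupd_EM[OF lo W Cons.prems(2) x(1)] .
    have "au (enc m) x = enc (eupd G s m x)" unfolding au_def using dec[OF Cons.prems(2)] by simp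
    then show ?case using Cons.IH[OF x(2) e] by simp
  qed
  have strpref: "str ol al = eact a0 s (foldl (eupd G s) EStart ol)"
    if "set ol \<subseteq> obs G" "ol \<noteq> []" for ol al
  proof -
    have ol: "ol = butlast ol @ [last ol]" using that(2) by simp
    have sb: "set (butlast ol) \<subseteq> obs G" using that(1) by (meson in_set_butlastD subset_iff)
    define m' where "m' = foldl (eupd G s) EStart (butlast ol)"
    have f: "foldl au m0 (butlast ol) = enc m'" "m' \<in> EM G s"
      using fold[OF sb EStartEM] unfolding m0_def m'_def by auto
    have "str ol al = eact a0 s (eupd G s m' (last ol))"
      unfolding str_def f(1) ao_def using dec[OF f(2)] by simp
    also have "\<dots> = eact a0 s (foldl (eupd G s) EStart ol)"
      by (subst ol) (simp add: m'_def)
    finally show ?thesis .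
  qed
  have strEM: "foldl (eupd G s) EStart ol \<in> EM G s" if "set ol \<subseteq> obs G" for ol
    using fold[OF that EStartEM] by blast
  have fm: "eve_finite_mem G str"
    unfolding eve_finite_mem_def
  proof (intro exI conjI)
    show "finite (enc ` EM G s)" using finEM by simp
    show "m0 \<in> enc ` EM G s" using EStartEM unfolding m0_def by simp
    show "\<forall>m\<in>enc ` EM G s. \<forall>ob\<in>obs G. au m ob \<in> enc ` EM G s \<and> ao m ob \<in> acts G"
    proof (intro ballI)
      fix m ob assume m: "m \<in> enc ` EM G s" and ob: "ob \<in> obs G"
      then obtain x where x: "x \<in> EM G s" "m = enc x" by blast
      have e: "eupd G s x ob \<in> EM G s" using eupd_EM[OF lo W x(1) ob] .
      show "au m ob \<in> enc ` EM G s \<and> ao m ob \<in> acts G"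
        unfolding au_def ao_def x(2) dec[OF x(1)] using e eact_acts[OF W a0 e] by simp
    qed
    show "\<forall>ol al. is_pref G ol al \<longrightarrow> str ol al = ao (foldl au m0 (butlast ol)) (last ol)"
      unfolding str_def by simp
  qed
  have os: "eve_obs_strat G str"
    unfolding eve_obs_strat_def
  proof (intro allI impI)
    fix ol al assume "is_pref G ol al"
    then have "set ol \<subseteq> obs G" "ol \<noteq> []" using pref_props by fastforce+
    then show "str ol al \<in> acts G" using strpref eact_acts[OF W a0 strEM] by simp
  qed
  define V where "V = (\<lambda>(h, q). case last (fst h) q of Fin k \<Rightarrow> k | _ \<Rightarrow> 0) ` (Heve G s \<times> states G)"
  have finV: "finite V" unfolding V_def using heve_finite[OF lo W] lo_fin_states[OF lo] by simp
  define B where "B = Min (insert 0 V)"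
  have B: "B \<le> k" if "k \<in> V" for k unfolding B_def using finV that by simp
  have win: "eve_wins_play G os as" if p: "is_play G os as" and ec: "eve_cons_play str os as" for os as
    unfolding eve_wins_play_def
  proof (intro allI impI)
    fix qs assume c: "is_concrete G os as qs"
    have osobs: "set (map os [0..<Suc n]) \<subseteq> obs G" for n using p unfolding is_play_def by auto
    have cons: "\<forall>n. as n = eact a0 s (foldl (eupd G s) EStart (map os [0..<Suc n]))"
    proof
      fix n
      have "as n = str (map os [0..<Suc n]) (map as [0..<n])" using ec unfolding eve_cons_play_def by blast
      also have "\<dots> = eact a0 s (foldl (eupd G s) EStart (map os [0..<Suc n]))"
        using strpref[OF osobs] by simp
      finally show "as n = eact a0 s (foldl (eupd G s) EStart (map os [0..<Suc n]))" .
    qed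
    have bnd: "real_of_int B \<le> (\<Sum>i<n. real_of_int (weight G (qs i) (as i) (qs (Suc i))))" for n
    proof -
      obtain fs ss where I: "(fs, ss) \<in> Heve G s" "supp (last fs) = os n"
        "vle (last fs (qs n)) (Fin (\<Sum>i<n. weight G (qs i) (as i) (qs (Suc i))))"
        using eve_play[OF lo W p cons c, of n] by blast
      obtain a where a: "last fs (qs n) = Fin a" "a \<le> (\<Sum>i<n. weight G (qs i) (as i) (qs (Suc i)))"
        using I(3) vle_Fin_right by blast
      have "qs n \<in> os n" using c unfolding is_concrete_def by blast
      moreover have "os n \<in> obs G" using p unfolding is_play_def by blast
      ultimately have "qs n \<in> states G" using lo_obs[OF lo] by blast
      then have "a \<in> V" unfolding V_def using I(1) a(1)
        by (intro image_eqI[where x = "((fs, ss), qs n)"]) auto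
      then have "B \<le> (\<Sum>i<n. weight G (qs i) (as i) (qs (Suc i)))" using B a(2) by fastforce
      then have "real_of_int B \<le> real_of_int (\<Sum>i<n. weight G (qs i) (as i) (qs (Suc i)))" by linarith
      then show ?thesis by (simp only: of_int_sum)
    qed
    show "0 \<le> mp_inf G as qs" unfolding mp_inf_def by (rule liminf_nonneg) (use bnd in blast)
  qed
  have "eve_winning_obs G str" unfolding eve_winning_obs_def using os win by blast
  then show ?thesis using fm by blast
qed


definition Hadam :: "('q, 'a) mpg \<Rightarrow> (('q \<Rightarrow> val) list \<Rightarrow> 'a list \<Rightarrow> 'a \<Rightarrow> ('q \<Rightarrow> val)) \<Rightarrow> (('q \<Rightarrow> val) list \<times> 'a list) set" where
  "Hadam G s = {(fs, ss). gam_hist G fs ss \<and> gam_adam_cons s fs ss}"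

lemma hadam_win:
  assumes "gamma_adam_winning G s" "(fs, ss) \<in> Hadam G s"
  shows "\<not> T_E G fs ss \<and> (\<not> T_A G fs ss \<longrightarrow> (\<forall>\<sigma>\<in>acts G. in_Pi G (fs @ [s fs ss \<sigma>]) (ss @ [\<sigma>])))"
  using assms unfolding gamma_adam_winning_def Hadam_def by blast

lemma hadam_len:
  assumes "(fs, ss) \<in> Hadam G s"
  shows "length fs = Suc (length ss) \<and> fs ! 0 = fI G"
  using assms unfolding Hadam_def gam_hist_def in_Pi_def by blast

lemma hadam_take:
  assumes "(fs, ss) \<in> Hadam G s" "k \<le> length ss"
  shows "(take (Suc k) fs, take k ss) \<in> Hadam G s"
proof -
  have "length fs = Suc (length ss)" using hadam_len[OF assms(1)] by blast
  then show ?thesis using assms gam_hist_take gam_adam_cons_take unfolding Hadam_def by blast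
qed

lemma hadam_take_NS:
  assumes "(fs, ss) \<in> Hadam G s" "k < length ss"
  shows "NS G (take (Suc k) fs) (take k ss)"
  using assms unfolding Hadam_def gam_hist_def NS_def by blast

lemma hadam_ext:
  assumes W: "gamma_adam_winning G s" and h: "(fs, ss) \<in> Hadam G s" and ns: "NS G fs ss"
    and sig: "\<sigma> \<in> acts G"
  shows "(fs @ [s fs ss \<sigma>], ss @ [\<sigma>]) \<in> Hadam G s"
proof -
  have ip: "in_Pi G (fs @ [s fs ss \<sigma>]) (ss @ [\<sigma>])"
    using hadam_win[OF W h] ns sig unfolding NS_def by blast
  have l: "length fs = Suc (length ss)" using hadam_len[OF h] by blast
  have gh: "gam_hist G fs ss" "gam_adam_cons s fs ss" using h unfolding Hadam_def by auto
  have "set (ss @ [\<sigma>]) \<subseteq> acts G" using gh sig unfolding gam_hist_def by auto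
  moreover have "\<forall>k<length (ss @ [\<sigma>]). \<not> T_E G (take (Suc k) (fs @ [s fs ss \<sigma>])) (take k (ss @ [\<sigma>])) \<and>
       \<not> T_A G (take (Suc k) (fs @ [s fs ss \<sigma>])) (take k (ss @ [\<sigma>]))"
  proof (intro allI impI)
    fix k assume k: "k < length (ss @ [\<sigma>])"
    show "\<not> T_E G (take (Suc k) (fs @ [s fs ss \<sigma>])) (take k (ss @ [\<sigma>])) \<and>
       \<not> T_A G (take (Suc k) (fs @ [s fs ss \<sigma>])) (take k (ss @ [\<sigma>]))"
    proof (cases "k = length ss")
      case True then show ?thesis using ns l unfolding NS_def by simp
    next
      case False then have "k < length ss" using k by simp
      then show ?thesis using gh l unfolding gam_hist_def by simp
    qed
  qed
  moreover have "gam_adam_cons s (fs @ [s fs ss \<sigma>]) (ss @ [\<sigma>])"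
    unfolding gam_adam_cons_def
  proof (intro allI impI)
    fix k assume k: "k < length (ss @ [\<sigma>])"
    show "(fs @ [s fs ss \<sigma>]) ! Suc k = s (take (Suc k) (fs @ [s fs ss \<sigma>])) (take k (ss @ [\<sigma>])) ((ss @ [\<sigma>]) ! k)"
    proof (cases "k = length ss")
      case True then show ?thesis using l by (simp add: nth_append)
    next
      case False then have "k < length ss" using k by simp
      then show ?thesis using gh l unfolding gam_adam_cons_def by (simp add: nth_append)
    qed
  qed
  ultimately show ?thesis using ip unfolding Hadam_def gam_hist_def by simp
qed

lemma hadam_finite:
  assumes lo: "mpg_lo G" and W: "gamma_adam_winning G s"
  shows "finite (Hadam G s)"
proof (rule hist_finite[of "Hadam G s" "fI G"])
  show "\<forall>(fs, ss)\<in>Hadam G s. length fs = Suc (length ss) \<and> fs ! 0 = fI G" using hadam_len by blast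
  show "\<forall>(fs, ss)\<in>Hadam G s. \<forall>k\<le>length ss. (take (Suc k) fs, take k ss) \<in> Hadam G s" using hadam_take by blast
  show "\<not> (\<exists>F S. \<forall>n. (map F [0..<Suc n], map S [0..<n]) \<in> Hadam G s)"
    using W unfolding gamma_adam_winning_def Hadam_def by blast
  show "\<forall>(fs, ss)\<in>Hadam G s. finite {(\<sigma>, f). (fs @ [f], ss @ [\<sigma>]) \<in> Hadam G s}"
  proof (intro ballI, clarify)
    fix fs ss assume h: "(fs, ss) \<in> Hadam G s"
    have l: "length fs = Suc (length ss)" using hadam_len[OF h] by blast
    have "{(\<sigma>, f). (fs @ [f], ss @ [\<sigma>]) \<in> Hadam G s} \<subseteq> (\<lambda>\<sigma>. (\<sigma>, s fs ss \<sigma>)) ` acts G"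
    proof
      fix x assume "x \<in> {(\<sigma>, f). (fs @ [f], ss @ [\<sigma>]) \<in> Hadam G s}"
      then obtain \<sigma> f where x: "x = (\<sigma>, f)" and e: "(fs @ [f], ss @ [\<sigma>]) \<in> Hadam G s" by blast
      then have "gam_adam_cons s (fs @ [f]) (ss @ [\<sigma>])" "set (ss @ [\<sigma>]) \<subseteq> acts G"
        unfolding Hadam_def gam_hist_def by auto
      then have "(fs @ [f]) ! Suc (length ss) = s (take (Suc (length ss)) (fs @ [f])) (take (length ss) (ss @ [\<sigma>])) ((ss @ [\<sigma>]) ! length ss)"
        "\<sigma> \<in> acts G"
        unfolding gam_adam_cons_def by auto
      then show "x \<in> (\<lambda>\<sigma>. (\<sigma>, s fs ss \<sigma>)) ` acts G" using l x by (simp add: nth_append)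
    qed
    moreover have "finite ((\<lambda>\<sigma>. (\<sigma>, s fs ss \<sigma>)) ` acts G)"
      using lo_fin_acts[OF lo] by simp
    ultimately show "finite {(\<sigma>, f). (fs @ [f], ss @ [\<sigma>]) \<in> Hadam G s}" using finite_subset by blast
  qed
qed

lemma hadam_init:
  shows "([fI G], []) \<in> Hadam G s \<and> NS G [fI G] []"
  unfolding Hadam_def gam_hist_def in_Pi_def gam_adam_cons_def NS_def T_E_def T_A_def by simp

datatype ('f, 'a) am = AJunk | ANode "'f list" "'a list"

definition ares :: "('q, 'a) mpg \<Rightarrow> ('q \<Rightarrow> val) list \<Rightarrow> 'a list \<Rightarrow> ('q \<Rightarrow> val, 'a) am" where
  "ares G fs ss = (if T_A G fs ss then
     (let i = (SOME i. i < length ss \<and> fprec 1 (fs ! length ss) (fs ! i) \<and> (\<exists>q\<in>supp (fs ! i). (fs ! i) q \<noteq> PInf))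
      in ANode (take (Suc i) fs) (take i ss))
    else ANode fs ss)"

fun aupd :: "('q, 'a) mpg \<Rightarrow> (('q \<Rightarrow> val) list \<Rightarrow> 'a list \<Rightarrow> 'a \<Rightarrow> ('q \<Rightarrow> val)) \<Rightarrow> ('q \<Rightarrow> val, 'a) am \<Rightarrow> 'q set \<Rightarrow> 'a \<Rightarrow> ('q \<Rightarrow> val, 'a) am" where
  "aupd G s AJunk ob \<sigma> = AJunk"
| "aupd G s (ANode fs ss) ob \<sigma> = (if ob = supp (last fs) \<and> \<sigma> \<in> acts G
     then ares G (fs @ [s fs ss \<sigma>]) (ss @ [\<sigma>]) else AJunk)"

definition ajunk :: "('q, 'a) mpg \<Rightarrow> 'q set \<Rightarrow> 'a \<Rightarrow> 'q set" where
  "ajunk G ob \<sigma> = (SOME o'. o' \<in> obs G \<and> o' \<inter> post G \<sigma> ob \<noteq> {})"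

fun aout :: "('q, 'a) mpg \<Rightarrow> (('q \<Rightarrow> val) list \<Rightarrow> 'a list \<Rightarrow> 'a \<Rightarrow> ('q \<Rightarrow> val)) \<Rightarrow> ('q \<Rightarrow> val, 'a) am \<Rightarrow> 'q set \<Rightarrow> 'a \<Rightarrow> 'q set" where
  "aout G s AJunk ob \<sigma> = ajunk G ob \<sigma>"
| "aout G s (ANode fs ss) ob \<sigma> = (if ob = supp (last fs) \<and> \<sigma> \<in> acts G
     then supp (s fs ss \<sigma>) else ajunk G ob \<sigma>)"

definition AM :: "('q, 'a) mpg \<Rightarrow> (('q \<Rightarrow> val) list \<Rightarrow> 'a list \<Rightarrow> 'a \<Rightarrow> ('q \<Rightarrow> val)) \<Rightarrow> ('q \<Rightarrow> val, 'a) am set" where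
  "AM G s = {AJunk} \<union> (\<lambda>(fs, ss). ANode fs ss) ` {h \<in> Hadam G s. NS G (fst h) (snd h)}"

lemma AM_finite: "mpg_lo G \<Longrightarrow> gamma_adam_winning G s \<Longrightarrow> finite (AM G s)"
proof -
  assume a: "mpg_lo G" "gamma_adam_winning G s"
  have "finite {h \<in> Hadam G s. NS G (fst h) (snd h)}"
    using hadam_finite[OF a] by (rule finite_subset[rotated]) auto
  then show ?thesis unfolding AM_def by simp
qed

lemma ANode_AM: "ANode fs ss \<in> AM G s \<longleftrightarrow> (fs, ss) \<in> Hadam G s \<and> NS G fs ss"
  unfolding AM_def by force

lemma AJunk_AM: "AJunk \<in> AM G s" unfolding AM_def by simp

lemma ares_in:
  assumes W: "gamma_adam_winning G s" and h: "(fs, ss) \<in> Hadam G s"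
  shows "\<exists>fs' ss'. ares G fs ss = ANode fs' ss' \<and> (fs', ss') \<in> Hadam G s \<and> NS G fs' ss' \<and>
     length ss' \<le> length ss \<and> supp (last fs') = supp (last fs) \<and>
     (T_A G fs ss \<longrightarrow> (\<forall>q\<in>supp (last fs'). vle (vadd (last fs q) 1) (last fs' q)) \<and> (\<exists>q\<in>supp (last fs'). last fs' q \<noteq> PInf)) \<and>
     (\<not> T_A G fs ss \<longrightarrow> fs' = fs \<and> ss' = ss)"
proof (cases "T_A G fs ss")
  case True
  have ex: "\<exists>i. i < length ss \<and> fprec 1 (fs ! length ss) (fs ! i) \<and> (\<exists>q\<in>supp (fs ! i). (fs ! i) q \<noteq> PInf)"
    (is "\<exists>i. ?P i") using True unfolding T_A_def by blast
  have "?P (SOME i. ?P i)" using ex by (rule someI_ex)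
  then obtain i where ieq: "(SOME i. ?P i) = i" and i: "i < length ss" "fprec 1 (fs ! length ss) (fs ! i)" "\<exists>q\<in>supp (fs ! i). (fs ! i) q \<noteq> PInf"
    by blast
  have l: "length fs = Suc (length ss)" using hadam_len[OF h] by blast
  have e: "ares G fs ss = ANode (take (Suc i) fs) (take i ss)" using True unfolding ares_def Let_def ieq by simp
  have lt: "last (take (Suc i) fs) = fs ! i" using i l by (intro last_take_Suc) simp
  have lf: "last fs = fs ! length ss" using l by (rule last_len)
  have "length (take i ss) \<le> length ss" by simp
  then show ?thesis
    using e hadam_take[OF h less_imp_le[OF i(1)]] hadam_take_NS[OF h i(1)] i(2,3) lt lf True
    unfolding fprec_def by auto
next
  case False
  then have "NS G fs ss" using hadam_win[OF W h] unfolding NS_def by blast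
  then show ?thesis using False h unfolding ares_def by auto
qed

lemma aupd_AM:
  assumes W: "gamma_adam_winning G s" and m: "m \<in> AM G s"
  shows "aupd G s m ob \<sigma> \<in> AM G s"
proof (cases m)
  case AJunk then show ?thesis using AJunk_AM by simp
next
  case (ANode fs ss)
  then have h: "(fs, ss) \<in> Hadam G s" "NS G fs ss" using m ANode_AM by blast+
  show ?thesis
  proof (cases "ob = supp (last fs) \<and> \<sigma> \<in> acts G")
    case True
    then have e: "(fs @ [s fs ss \<sigma>], ss @ [\<sigma>]) \<in> Hadam G s"
      using hadam_ext[OF W h] by blast
    obtain fs' ss' where r: "ares G (fs @ [s fs ss \<sigma>]) (ss @ [\<sigma>]) = ANode fs' ss'"
      "(fs', ss') \<in> Hadam G s" "NS G fs' ss'" using ares_in[OF W e] by blast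
    have "ANode fs' ss' \<in> AM G s" using r(2,3) ANode_AM by blast
    moreover have "aupd G s m ob \<sigma> = ANode fs' ss'" using True ANode r(1) by (simp only: aupd.simps if_True simp_thms)
    ultimately show ?thesis by simp
  next
    case False
    have "aupd G s m ob \<sigma> = AJunk" using False ANode by (simp only: aupd.simps if_False)
    then show ?thesis using AJunk_AM by simp
  qed
qed

lemma ajunk_ok:
  assumes lo: "mpg_lo G" and "ob \<in> obs G" "\<sigma> \<in> acts G"
  shows "ajunk G ob \<sigma> \<in> obs G \<and> ajunk G ob \<sigma> \<inter> post G \<sigma> ob \<noteq> {}"
proof -
  have "\<exists>o'. o' \<in> obs G \<and> o' \<inter> post G \<sigma> ob \<noteq> {}" using lo_junk[OF assms] by blast
  then show ?thesis unfolding ajunk_def by (rule someI_ex)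
qed

lemma aout_ok:
  assumes lo: "mpg_lo G" and W: "gamma_adam_winning G s" and m: "m \<in> AM G s"
    and ob: "ob \<in> obs G" and sig: "\<sigma> \<in> acts G"
  shows "aout G s m ob \<sigma> \<in> obs G \<and> aout G s m ob \<sigma> \<inter> post G \<sigma> ob \<noteq> {}"
proof (cases m)
  case AJunk then show ?thesis using ajunk_ok[OF lo ob sig] by simp
next
  case (ANode fs ss)
  then have h: "(fs, ss) \<in> Hadam G s" "NS G fs ss" using m ANode_AM by blast+
  show ?thesis
  proof (cases "ob = supp (last fs)")
    case True
    have "in_Pi G (fs @ [s fs ss \<sigma>]) (ss @ [\<sigma>])" using hadam_win[OF W h(1)] h(2) sig unfolding NS_def by blast
    then have fs: "fsucc G (last fs) \<sigma> (s fs ss \<sigma>)" by (rule in_Pi_last_fsucc)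
    have o: "supp (s fs ss \<sigma>) \<in> obs G" "supp (s fs ss \<sigma>) \<subseteq> post G \<sigma> ob"
      using fsucc_supp[OF fs] True by auto
    have ne: "supp (s fs ss \<sigma>) \<noteq> {}" using lo_obs[OF lo o(1)] by blast
    have "aout G s m ob \<sigma> = supp (s fs ss \<sigma>)" using ANode True sig by (simp only: aout.simps if_True simp_thms)
    then show ?thesis using o ne by (simp add: Int_absorb2)
  next
    case False
    have "aout G s m ob \<sigma> = ajunk G ob \<sigma>" using ANode False by (simp only: aout.simps if_False simp_thms)
    then show ?thesis using ajunk_ok[OF lo ob sig] by simp
  qed
qed


lemma neg_liminf:
  fixes S :: "nat \<Rightarrow> int" and J :: "nat \<Rightarrow> nat" and L :: nat
  assumes A: "\<forall>n. S n + int (J n) \<le> C" and B: "\<forall>n. n \<le> L + (L + 1) * J n"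
  shows "Liminf sequentially (\<lambda>n. ereal (real_of_int (S n) / real n)) < 0"
proof -
  define K where "K = (int L + 1) * C + int L"
  define e where "e = 1 / (2 * (real L + 1))"
  have epos: "e > 0" unfolding e_def by simp
  have ev: "eventually (\<lambda>n. ereal (real_of_int (S n) / real n) \<le> ereal (- e)) sequentially"
    unfolding eventually_sequentially
  proof (intro exI[of _ "nat (2 * K) + 1"] allI impI)
    fix n assume n: "nat (2 * K) + 1 \<le> n"
    have n1: "n \<ge> 1" and nK: "2 * K \<le> int n" using n by auto
    have "(int L + 1) * S n \<le> (int L + 1) * (C - int (J n))"
      using A by (intro mult_left_mono) (auto simp: algebra_simps)
    also have "\<dots> = (int L + 1) * C - int ((L + 1) * J n)" by (simp add: algebra_simps)
    also have "\<dots> \<le> (int L + 1) * C - (int n - int L)" using B[rule_format, of n] by linarith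
    finally have i1: "(int L + 1) * S n \<le> K - int n" unfolding K_def by linarith
    then have i2: "2 * (int L + 1) * S n \<le> - int n" using nK by linarith
    then have i3: "2 * (real L + 1) * real_of_int (S n) \<le> - real n"
      by (metis (mono_tags, opaque_lifting) of_int_le_iff of_int_minus of_int_mult of_int_of_nat_eq of_int_add of_int_1 of_int_numeral)
    have "real_of_int (S n) / real n \<le> - e"
      unfolding e_def using n1 i3 by (simp add: field_simps)
    then show "ereal (real_of_int (S n) / real n) \<le> ereal (- e)" by simp
  qed
  have "Liminf sequentially (\<lambda>n. ereal (real_of_int (S n) / real n)) \<le> Limsup sequentially (\<lambda>n. ereal (real_of_int (S n) / real n))"
    by (rule Liminf_le_Limsup) simp
  also have "\<dots> \<le> ereal (- e)" by (rule Limsup_bounded[OF ev])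
  also have "\<dots> < 0" using epos by simp
  finally show ?thesis .
qed


locale adam_run =
  fixes G :: "('q, 'a) mpg" and s :: "('q \<Rightarrow> val) list \<Rightarrow> 'a list \<Rightarrow> 'a \<Rightarrow> ('q \<Rightarrow> val)"
    and os :: "nat \<Rightarrow> 'q set" and as :: "nat \<Rightarrow> 'a" and mem :: "nat \<Rightarrow> ('q \<Rightarrow> val, 'a) am"
  assumes lo: "mpg_lo G" and W: "gamma_adam_winning G s" and p: "is_play G os as"
    and cons: "\<And>n. os (Suc n) = aout G s (mem n) (os n) (as n)"
    and m0: "mem 0 = ANode [fI G] []"
    and mS: "\<And>n. mem (Suc n) = aupd G s (mem n) (os n) (as n)"
begin

lemma inv: "\<exists>fs ss. mem n = ANode fs ss \<and> (fs, ss) \<in> Hadam G s \<and> NS G fs ss \<and> supp (last fs) = os n"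
proof (induction n)
  case 0
  have "os 0 = {init G}" using p unfolding is_play_def by blast
  then show ?case using m0 hadam_init by (simp add: fI_def supp_def)
next
  case (Suc n)
  then obtain fs ss where I: "mem n = ANode fs ss" "(fs, ss) \<in> Hadam G s" "NS G fs ss" "supp (last fs) = os n"
    by blast
  have sig: "as n \<in> acts G" using p unfolding is_play_def by blast
  have o: "os (Suc n) = supp (s fs ss (as n))"
    using cons[of n] I(1) I(4)[symmetric] sig by (simp only: aout.simps if_True simp_thms)
  have e: "(fs @ [s fs ss (as n)], ss @ [as n]) \<in> Hadam G s" using hadam_ext[OF W I(2,3) sig] .
  obtain fs' ss' where r: "ares G (fs @ [s fs ss (as n)]) (ss @ [as n]) = ANode fs' ss'"
    "(fs', ss') \<in> Hadam G s" "NS G fs' ss'" "supp (last fs') = supp (last (fs @ [s fs ss (as n)]))"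
    using ares_in[OF W e] by blast
  have "mem (Suc n) = ANode fs' ss'"
    using mS[of n] I(1) I(4)[symmetric] sig r(1) by (simp only: aupd.simps if_True simp_thms)
  then show ?case using r(2,3,4) o by simp
qed

definition mfs :: "nat \<Rightarrow> ('q \<Rightarrow> val) list" where
  "mfs n = (case mem n of ANode fs ss \<Rightarrow> fs | AJunk \<Rightarrow> [])"
definition mss :: "nat \<Rightarrow> 'a list" where
  "mss n = (case mem n of ANode fs ss \<Rightarrow> ss | AJunk \<Rightarrow> [])"
definition P :: "nat \<Rightarrow> 'q \<Rightarrow> val" where
  "P n = last (mfs n)"
definition fpre :: "nat \<Rightarrow> 'q \<Rightarrow> val" where
  "fpre n = s (mfs n) (mss n) (as n)"
definition R :: "nat \<Rightarrow> bool" where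
  "R n \<longleftrightarrow> T_A G (mfs n @ [fpre n]) (mss n @ [as n])"

lemma mem_eq: "mem n = ANode (mfs n) (mss n)" and hist: "(mfs n, mss n) \<in> Hadam G s" "NS G (mfs n) (mss n)"
  and suppP: "supp (P n) = os n"
  using inv[of n] unfolding mfs_def mss_def P_def by auto

lemma step:
  shows "os (Suc n) = supp (fpre n)" and "fsucc G (P n) (as n) (fpre n)"
    and "\<not> R n \<Longrightarrow> P (Suc n) = fpre n \<and> length (mss (Suc n)) = Suc (length (mss n))"
    and "R n \<Longrightarrow> (\<forall>q\<in>supp (P (Suc n)). vle (vadd (fpre n q) 1) (P (Suc n) q)) \<and> (\<exists>q\<in>supp (P (Suc n)). P (Suc n) q \<noteq> PInf)"
    and "supp (P (Suc n)) = supp (fpre n)"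
proof -
  have sig: "as n \<in> acts G" using p unfolding is_play_def by blast
  have I: "mem n = ANode (mfs n) (mss n)" "(mfs n, mss n) \<in> Hadam G s" "NS G (mfs n) (mss n)" "supp (last (mfs n)) = os n"
    using mem_eq hist suppP unfolding P_def by auto
  show o: "os (Suc n) = supp (fpre n)"
    using cons[of n] I(1) I(4)[symmetric] sig unfolding fpre_def by (simp only: aout.simps if_True simp_thms)
  have "in_Pi G (mfs n @ [fpre n]) (mss n @ [as n])" using hadam_win[OF W I(2)] I(3) sig unfolding NS_def fpre_def by blast
  then show "fsucc G (P n) (as n) (fpre n)" unfolding P_def by (rule in_Pi_last_fsucc)
  have e: "(mfs n @ [fpre n], mss n @ [as n]) \<in> Hadam G s" using hadam_ext[OF W I(2,3) sig] unfolding fpre_def .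
  obtain fs' ss' where r: "ares G (mfs n @ [fpre n]) (mss n @ [as n]) = ANode fs' ss'"
    "length ss' \<le> length (mss n @ [as n])" "supp (last fs') = supp (last (mfs n @ [fpre n]))"
    "T_A G (mfs n @ [fpre n]) (mss n @ [as n]) \<longrightarrow> (\<forall>q\<in>supp (last fs'). vle (vadd (last (mfs n @ [fpre n]) q) 1) (last fs' q)) \<and> (\<exists>q\<in>supp (last fs'). last fs' q \<noteq> PInf)"
    "\<not> T_A G (mfs n @ [fpre n]) (mss n @ [as n]) \<longrightarrow> fs' = mfs n @ [fpre n] \<and> ss' = mss n @ [as n]"
    using ares_in[OF W e] by blast
  have "mem (Suc n) = ANode fs' ss'"
    using mS[of n] I(1) I(4)[symmetric] sig r(1) unfolding fpre_def by (simp only: aupd.simps if_True simp_thms)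
  then have fs': "mfs (Suc n) = fs'" "mss (Suc n) = ss'" unfolding mfs_def mss_def by simp_all
  show "\<not> R n \<Longrightarrow> P (Suc n) = fpre n \<and> length (mss (Suc n)) = Suc (length (mss n))"
    using r(5) fs' unfolding R_def P_def by simp
  show "R n \<Longrightarrow> (\<forall>q\<in>supp (P (Suc n)). vle (vadd (fpre n q) 1) (P (Suc n) q)) \<and> (\<exists>q\<in>supp (P (Suc n)). P (Suc n) q \<noteq> PInf)"
    using r(4) fs' unfolding R_def P_def by simp
  show "supp (P (Suc n)) = supp (fpre n)" using r(3) fs' unfolding P_def by simp
qed

lemma tight_pred:
  assumes "P (Suc n) q = Fin b"
  shows "\<exists>q' a. P n q' = Fin a \<and> (q', as n, q) \<in> trans G \<and> a + weight G q' (as n) q + (if R n then 1 else 0) \<le> b"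
proof -
  have qs: "q \<in> supp (P (Suc n))" using assms unfolding supp_def by simp
  then have qf: "q \<in> supp (fpre n)" using step(5) by simp
  obtain c where c: "fpre n q = Fin c" "c + (if R n then 1 else 0) \<le> b"
  proof (cases "R n")
    case True
    then have "vle (vadd (fpre n q) 1) (Fin b)" using step(4)[OF True] qs assms by auto
    then obtain c where "vadd (fpre n q) 1 = Fin c" "c \<le> b" using vle_Fin_right by blast
    then have "fpre n q = Fin (c - 1)" by (cases "fpre n q") auto
    then show ?thesis using that[of "c - 1"] True \<open>c \<le> b\<close> by simp
  next
    case False
    then show ?thesis using step(3)[OF False] assms that[of b] by simp
  qed
  define SET where "SET = {vadd (P n q') (weight G q' (as n) q) | q'. q' \<in> supp (P n) \<and> (q', as n, q) \<in> trans G}"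
  have "fpre n q = vmin SET \<or> fpre n q = PInf" using step(2) qf unfolding fsucc_def SET_def by blast
  then have "vmin SET = Fin c" using c(1) by auto
  then have "Fin c \<in> SET" using vmin_Fin[OF finite_preds[OF lo]] unfolding SET_def by blast
  then obtain q' where q': "q' \<in> supp (P n)" "(q', as n, q) \<in> trans G" "vadd (P n q') (weight G q' (as n) q) = Fin c"
    unfolding SET_def by auto
  then obtain a where a: "P n q' = Fin a" "a + weight G q' (as n) q = c" by (cases "P n q'") auto
  show ?thesis by (rule exI[of _ q'], rule exI[of _ a]) (use a q' c(2) in simp)
qed

end


context adam_run
begin

definition L :: nat where "L = Max ((\<lambda>h. length (snd h)) ` Hadam G s)"

lemma len_le_L: "length (mss n) \<le> L"
proof -
  have "finite ((\<lambda>h. length (snd h)) ` Hadam G s)" using hadam_finite[OF lo W] by simp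
  then show ?thesis unfolding L_def using hist(1)[of n] by (metis (mono_tags, lifting) Max_ge image_eqI snd_conv)
qed

definition J :: "nat \<Rightarrow> nat" where "J n = (\<Sum>i<n. if R i then 1 else 0)"

lemma J_Suc: "J (Suc n) = J n + (if R n then 1 else 0)" unfolding J_def by simp

lemma len_inv: "n \<le> L + (L + 1) * J n"
proof -
  have "n \<le> length (mss n) + (L + 1) * J n" for n
  proof (induction n)
    case 0 then show ?case by simp
  next
    case (Suc n)
    show ?case
    proof (cases "R n")
      case True
      then have "(L + 1) * J (Suc n) = (L + 1) * J n + L + 1" using J_Suc by simp
      then show ?thesis using Suc len_le_L[of n] by linarith
    next
      case False
      then show ?thesis using Suc step(3)[OF False] J_Suc by simp
    qed
  qed
  then show ?thesis using len_le_L[of n] by (meson add_le_mono1 le_trans)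
qed

lemma P_states: "P n q \<noteq> Bot \<Longrightarrow> q \<in> states G"
proof -
  assume "P n q \<noteq> Bot"
  then have "q \<in> os n" using suppP[of n] unfolding supp_def by blast
  moreover have "os n \<in> obs G" using p unfolding is_play_def by blast
  ultimately show ?thesis using lo_obs[OF lo] by blast
qed

definition Vset :: "int set" where
  "Vset = (\<lambda>(h, q). case last (fst h) q of Fin k \<Rightarrow> k | _ \<Rightarrow> 0) ` (Hadam G s \<times> states G)"
definition C :: int where "C = Max (insert 0 Vset)"

lemma P_le_C: "P n q = Fin k \<Longrightarrow> k \<le> C"
proof -
  assume a: "P n q = Fin k"
  have fin: "finite Vset" unfolding Vset_def using hadam_finite[OF lo W] lo_fin_states[OF lo] by simp
  have "q \<in> states G" by (rule P_states[of n]) (simp add: a)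
  then have "k \<in> Vset" unfolding Vset_def using hist(1)[of n] a unfolding P_def
    by (intro image_eqI[where x = "((mfs n, mss n), q)"]) auto
  then show ?thesis unfolding C_def using fin by simp
qed

definition pv :: "nat \<Rightarrow> 'q \<Rightarrow> int" where "pv n q = (case P n q of Fin k \<Rightarrow> k | _ \<Rightarrow> 0)"

definition tight :: "nat \<Rightarrow> 'q \<Rightarrow> 'q \<Rightarrow> bool" where
  "tight i q' q \<longleftrightarrow> (q', as i, q) \<in> trans G \<and> pv i q' + weight G q' (as i) q + (if R i then 1 else 0) \<le> pv (Suc i) q"

definition T :: "'q list set" where
  "T = {xs. \<forall>i<length xs. (\<exists>k. P i (xs ! i) = Fin k) \<and> (i = 0 \<longrightarrow> xs ! 0 = init G) \<and>
            (Suc i < length xs \<longrightarrow> tight i (xs ! i) (xs ! Suc i))}"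

lemma P0: "P 0 = fI G" unfolding P_def mfs_def using m0 by simp

lemma back_path: "P n q = Fin k \<Longrightarrow> \<exists>xs\<in>T. length xs = Suc n \<and> xs ! n = q"
proof (induction n arbitrary: q k)
  case 0
  then have "q = init G" using P0 unfolding fI_def by (auto split: if_splits)
  then show ?case using 0 unfolding T_def by (intro bexI[of _ "[q]"]) auto
next
  case (Suc n)
  obtain q' a where q': "P n q' = Fin a" "(q', as n, q) \<in> trans G"
    "a + weight G q' (as n) q + (if R n then 1 else 0) \<le> k" using tight_pred[OF Suc.prems] by blast
  obtain xs where xs: "xs \<in> T" "length xs = Suc n" "xs ! n = q'" using Suc.IH[OF q'(1)] by blast
  have t: "tight n q' q" unfolding tight_def pv_def using q' Suc.prems by simp
  have "xs @ [q] \<in> T" unfolding T_def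
  proof (rule CollectI, rule allI, rule impI)
    fix i assume i: "i < length (xs @ [q])"
    have c1: "\<exists>k. P i ((xs @ [q]) ! i) = Fin k"
    proof (cases "i = Suc n")
      case True then show ?thesis using Suc.prems xs(2) by (simp add: nth_append)
    next
      case False then have "i < length xs" using i xs(2) by simp
      then show ?thesis using xs(1) unfolding T_def by (simp add: nth_append)
    qed
    have x0: "xs ! 0 = init G" using xs(1,2) unfolding T_def by auto
    have c2: "i = 0 \<longrightarrow> (xs @ [q]) ! 0 = init G" using x0 xs(2) by (simp add: nth_append)
    have c3: "Suc i < length (xs @ [q]) \<longrightarrow> tight i ((xs @ [q]) ! i) ((xs @ [q]) ! Suc i)"
    proof
      assume si: "Suc i < length (xs @ [q])"
      show "tight i ((xs @ [q]) ! i) ((xs @ [q]) ! Suc i)"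
      proof (cases "i = n")
        case True then show ?thesis using t xs(2,3) by (simp add: nth_append)
      next
        case False then have "Suc i < length xs" using si xs(2) by simp
        then show ?thesis using xs(1) unfolding T_def by (simp add: nth_append)
      qed
    qed
    show "(\<exists>k. P i ((xs @ [q]) ! i) = Fin k) \<and> (i = 0 \<longrightarrow> (xs @ [q]) ! 0 = init G) \<and>
            (Suc i < length (xs @ [q]) \<longrightarrow> tight i ((xs @ [q]) ! i) ((xs @ [q]) ! Suc i))"
      using c1 c2 c3 by blast
  qed
  then show ?case using xs(2) by (intro bexI[of _ "xs @ [q]"]) (auto simp: nth_append)
qed

lemma resets: "\<exists>n\<ge>N. R n"
proof (rule ccontr)
  assume "\<not> ?thesis"
  then have nr: "\<And>n. n \<ge> N \<Longrightarrow> \<not> R n" by blast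
  have "length (mss (N + k)) = length (mss N) + k" for k
  proof (induction k)
    case 0 then show ?case by simp
  next
    case (Suc k)
    then show ?case using step(3)[OF nr[of "N + k"]] by simp
  qed
  then have "length (mss (N + Suc L)) = length (mss N) + Suc L" by blast
  then have "length (mss (N + Suc L)) > L" by simp
  then show False using len_le_L[of "N + Suc L"] by simp
qed

lemma T_infinite: "infinite T"
proof
  assume fin: "finite T"
  define M where "M = Max (length ` T)"
  obtain n where n: "n \<ge> M" "R n" using resets by blast
  obtain q where q: "q \<in> supp (P (Suc n))" "P (Suc n) q \<noteq> PInf" using step(4)[OF n(2)] by blast
  then obtain k where "P (Suc n) q = Fin k" unfolding supp_def by (cases "P (Suc n) q") auto
  then obtain xs where "xs \<in> T" "length xs = Suc (Suc n)" using back_path by blast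
  then have "Suc (Suc n) \<le> M" unfolding M_def using fin by (metis Max_ge finite_imageI image_eqI)
  then show False using n(1) by simp
qed

lemma T_props: "[] \<in> T" "\<forall>xs x. xs @ [x] \<in> T \<longrightarrow> xs \<in> T" "\<forall>xs. finite {x. xs @ [x] \<in> T}"
proof -
  show "[] \<in> T" unfolding T_def by simp
  show "\<forall>xs x. xs @ [x] \<in> T \<longrightarrow> xs \<in> T"
  proof (intro allI impI)
    fix xs x assume a: "xs @ [x] \<in> T"
    show "xs \<in> T" unfolding T_def
    proof (rule CollectI, rule allI, rule impI)
      fix i assume i: "i < length xs"
      have ii: "i < length (xs @ [x])" using i by simp
      have A: "(\<exists>k. P i ((xs @ [x]) ! i) = Fin k) \<and> (i = 0 \<longrightarrow> (xs @ [x]) ! 0 = init G) \<and>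
            (Suc i < length (xs @ [x]) \<longrightarrow> tight i ((xs @ [x]) ! i) ((xs @ [x]) ! Suc i))"
        using a ii unfolding T_def by blast
      have c1: "\<exists>k. P i (xs ! i) = Fin k" using A i by (simp add: nth_append)
      have c2: "i = 0 \<longrightarrow> xs ! 0 = init G" using A i by (cases xs) (auto simp: nth_append)
      have c3: "Suc i < length xs \<longrightarrow> tight i (xs ! i) (xs ! Suc i)"
      proof
        assume si: "Suc i < length xs"
        then have "(xs @ [x]) ! i = xs ! i" "(xs @ [x]) ! Suc i = xs ! Suc i" by (simp_all add: nth_append)
        then show "tight i (xs ! i) (xs ! Suc i)" using A si by simp
      qed
      show "(\<exists>k. P i (xs ! i) = Fin k) \<and> (i = 0 \<longrightarrow> xs ! 0 = init G) \<and>
            (Suc i < length xs \<longrightarrow> tight i (xs ! i) (xs ! Suc i))" using c1 c2 c3 by blast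
    qed
  qed
  show "\<forall>xs. finite {x. xs @ [x] \<in> T}"
  proof
    fix xs
    have "{x. xs @ [x] \<in> T} \<subseteq> states G"
    proof
      fix x assume "x \<in> {x. xs @ [x] \<in> T}"
      then have "\<exists>k. P (length xs) ((xs @ [x]) ! length xs) = Fin k" unfolding T_def by auto
      then obtain k where "P (length xs) x = Fin k" by (auto simp: nth_append)
      then show "x \<in> states G" by (intro P_states[of "length xs"]) simp
    qed
    then show "finite {x. xs @ [x] \<in> T}" using lo_fin_states[OF lo] finite_subset by blast
  qed
qed

lemma bad_path: "\<exists>qs. is_concrete G os as qs \<and> mp_inf G as qs < 0"
proof -
  obtain g where g: "\<forall>n. map g [0..<n] \<in> T" using koenig[OF T_props T_infinite] by blast
  have gT: "(\<exists>k. P n (g n) = Fin k) \<and> (n = 0 \<longrightarrow> g 0 = init G) \<and> tight n (g n) (g (Suc n))" for n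
  proof -
    define ys where "ys = map g [0..<Suc (Suc n)]"
    have ys: "ys \<in> T" "length ys = Suc (Suc n)" "\<And>i. i < Suc (Suc n) \<Longrightarrow> ys ! i = g i"
      using g unfolding ys_def by (simp_all add: nth_map_upt del: upt_Suc)
    have A: "\<forall>i<length ys. (\<exists>k. P i (ys ! i) = Fin k) \<and> (i = 0 \<longrightarrow> ys ! 0 = init G) \<and>
            (Suc i < length ys \<longrightarrow> tight i (ys ! i) (ys ! Suc i))" using ys(1) unfolding T_def by blast
    have "(\<exists>k. P n (ys ! n) = Fin k) \<and> (Suc n < length ys \<longrightarrow> tight n (ys ! n) (ys ! Suc n))"
      using A ys(2) by simp
    moreover have "ys ! 0 = init G" using A ys(2) by auto
    ultimately show ?thesis using ys(2,3) by auto
  qed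
  have conc: "is_concrete G os as g" unfolding is_concrete_def
  proof
    fix i
    have "g i \<in> supp (P i)" using gT[of i] unfolding supp_def by auto
    then show "g i \<in> os i \<and> (g i, as i, g (Suc i)) \<in> trans G" using suppP gT[of i] unfolding tight_def by auto
  qed
  define S where "S n = (\<Sum>i<n. weight G (g i) (as i) (g (Suc i)))" for n
  have sumb: "S n + int (J n) \<le> pv n (g n)" for n
  proof (induction n)
    case 0
    have "g 0 = init G" using gT[of 0] by simp
    then show ?case using P0 unfolding S_def J_def pv_def fI_def by simp
  next
    case (Suc n)
    have "S (Suc n) + int (J (Suc n)) = S n + int (J n) + weight G (g n) (as n) (g (Suc n)) + (if R n then 1 else 0)"
      unfolding S_def J_Suc by simp
    also have "\<dots> \<le> pv n (g n) + weight G (g n) (as n) (g (Suc n)) + (if R n then 1 else 0)" using Suc by simp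
    also have "\<dots> \<le> pv (Suc n) (g (Suc n))" using gT[of n] unfolding tight_def by simp
    finally show ?case .
  qed
  have SC: "S n + int (J n) \<le> C" for n
  proof -
    obtain k where "P n (g n) = Fin k" using gT[of n] by blast
    then have "pv n (g n) \<le> C" unfolding pv_def using P_le_C by simp
    then show ?thesis using sumb[of n] by simp
  qed
  have "Liminf sequentially (\<lambda>n. ereal (real_of_int (S n) / real n)) < 0"
    using neg_liminf[of S J C L] SC len_inv by blast
  moreover have "mp_inf G as g = Liminf sequentially (\<lambda>n. ereal (real_of_int (S n) / real n))"
    unfolding mp_inf_def S_def by (simp only: of_int_sum)
  ultimately show ?thesis using conc by auto
qed

end


lemma adam_part:
  fixes G :: "('q, 'a) mpg"
  assumes lo: "mpg_lo G" and W: "gamma_adam_winning G s"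
  shows "\<exists>str. adam_winning_obs G str \<and> adam_finite_mem G str"
proof -
  have finAM: "finite (AM G s)" by (rule AM_finite[OF lo W])
  obtain enc :: "('q \<Rightarrow> val, 'a) am \<Rightarrow> nat" and N where enc: "enc ` AM G s = {i. i < N}" "inj_on enc (AM G s)"
    using finite_imp_inj_to_nat_seg[OF finAM] by blast
  define dec where "dec = inv_into (AM G s) enc"
  have dec: "m \<in> AM G s \<Longrightarrow> dec (enc m) = m" for m using enc(2) by (simp add: dec_def)
  define au where "au i ob \<sigma> = enc (aupd G s (dec i) ob \<sigma>)" for i ob \<sigma>
  define ao where "ao i ob \<sigma> = aout G s (dec i) ob \<sigma>" for i ob \<sigma>
  define A0 where "A0 = (ANode [fI G] [] :: ('q \<Rightarrow> val, 'a) am)"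
  define m0 where "m0 = enc A0"
  define Fu where "Fu = (\<lambda>m (ob, \<sigma>'). au m ob \<sigma>')"
  define Fa where "Fa = (\<lambda>m (ob, \<sigma>'). aupd G s m ob \<sigma>')"
  define str where "str ol al \<sigma> = ao (foldl Fu m0 (zip (butlast ol) al)) (last ol) \<sigma>"
    for ol :: "'q set list" and al :: "'a list" and \<sigma> :: 'a
  have A0AM: "A0 \<in> AM G s" unfolding A0_def using hadam_init ANode_AM by blast
  have fold: "foldl Fu (enc m) prs = enc (foldl Fa m prs) \<and> foldl Fa m prs \<in> AM G s"
    if "m \<in> AM G s" for prs m
    using that
  proof (induction prs arbitrary: m)
    case Nil then show ?case by simp
  next
    case (Cons x xs)
    obtain ob \<sigma> where x: "x = (ob, \<sigma>)" by (cases x)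
    have e: "aupd G s m ob \<sigma> \<in> AM G s" using aupd_AM[OF W Cons.prems] .
    have "Fu (enc m) x = enc (Fa m x)" unfolding Fu_def Fa_def au_def x using dec[OF Cons.prems] by simp
    moreover have "Fa m x = aupd G s m ob \<sigma>" unfolding Fa_def x by simp
    ultimately show ?case using Cons.IH[OF e] by simp
  qed
  have strm: "str ol al \<sigma> = aout G s (foldl Fa A0 (zip (butlast ol) al)) (last ol) \<sigma>" for ol al \<sigma>
    unfolding str_def ao_def m0_def using fold[OF A0AM] dec by simp
  have fm: "adam_finite_mem G str"
    unfolding adam_finite_mem_def
  proof (intro exI conjI)
    show "finite (enc ` AM G s)" using finAM by simp
    show "m0 \<in> enc ` AM G s" using A0AM unfolding m0_def by simp
    show "\<forall>m\<in>enc ` AM G s. \<forall>ob\<in>obs G. \<forall>\<sigma>\<in>acts G. au m ob \<sigma> \<in> enc ` AM G s \<and> ao m ob \<sigma> \<in> obs G"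
    proof (intro ballI)
      fix m ob \<sigma> assume m: "m \<in> enc ` AM G s" and ob: "ob \<in> obs G" and sig: "\<sigma> \<in> acts G"
      then obtain x where x: "x \<in> AM G s" "m = enc x" by blast
      have e: "aupd G s x ob \<sigma> \<in> AM G s" using aupd_AM[OF W x(1)] .
      show "au m ob \<sigma> \<in> enc ` AM G s \<and> ao m ob \<sigma> \<in> obs G"
        unfolding au_def ao_def x(2) dec[OF x(1)] using e aout_ok[OF lo W x(1) ob sig] by simp
    qed
    show "\<forall>ol al \<sigma>. is_pref G ol al \<and> \<sigma> \<in> acts G \<longrightarrow>
        str ol al \<sigma> = ao (foldl (\<lambda>m (ob, \<sigma>'). au m ob \<sigma>') m0 (zip (butlast ol) al)) (last ol) \<sigma>"
      unfolding str_def Fu_def by simp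
  qed
  have os: "adam_obs_strat G str"
    unfolding adam_obs_strat_def
  proof (intro allI impI)
    fix ol al \<sigma> assume a: "is_pref G ol al \<and> \<sigma> \<in> acts G"
    then have "set ol \<subseteq> obs G" "length ol = Suc (length al)" using pref_props by blast+
    then have lo': "last ol \<in> obs G" by (metis Zero_not_Suc last_in_set list.size(3) subsetD)
    have mm: "foldl Fa A0 (zip (butlast ol) al) \<in> AM G s" using fold[OF A0AM] by blast
    show "str ol al \<sigma> \<in> obs G \<and> str ol al \<sigma> \<inter> post G \<sigma> (last ol) \<noteq> {}"
      unfolding strm using aout_ok[OF lo W mm lo'] a by blast
  qed
  have win: "\<not> eve_wins_play G os as" if p: "is_play G os as" and ac: "adam_cons_play str os as" for os as
  proof -
    define mem where "mem n = foldl Fa A0 (zip (map os [0..<n]) (map as [0..<n]))" for n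
    have run: "adam_run G s os as mem"
    proof
      show "mpg_lo G" by (rule lo)
      show "gamma_adam_winning G s" by (rule W)
      show "is_play G os as" by (rule p)
      show "mem 0 = ANode [fI G] []" unfolding mem_def A0_def by simp
      fix n
      show "mem (Suc n) = aupd G s (mem n) (os n) (as n)"
        unfolding mem_def by (simp add: Fa_def)
      have "os (Suc n) = str (map os [0..<Suc n]) (map as [0..<n]) (as n)"
        using ac unfolding adam_cons_play_def by blast
      also have "\<dots> = aout G s (mem n) (os n) (as n)"
      proof -
        have b: "butlast (map os [0..<Suc n]) = map os [0..<n]" "last (map os [0..<Suc n]) = os n" by simp_all
        show ?thesis unfolding strm b mem_def ..
      qed
      finally show "os (Suc n) = aout G s (mem n) (os n) (as n)" .
    qed
    obtain qs where "is_concrete G os as qs" "mp_inf G as qs < 0" using adam_run.bad_path[OF run] by blast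
    then show ?thesis unfolding eve_wins_play_def by (meson not_le)
  qed
  have "adam_winning_obs G str" unfolding adam_winning_obs_def using os win by blast
  then show ?thesis using fm by blast
qed

theorem theorem3:
  fixes G :: "('q, 'a) mpg"
  assumes "mpg_lo G"
  shows "((\<exists>s. gamma_eve_winning G s) \<longrightarrow>
            (\<exists>str. eve_winning_obs G str \<and> eve_finite_mem G str)) \<and>
         ((\<exists>s. gamma_adam_winning G s) \<longrightarrow>
            (\<exists>str. adam_winning_obs G str \<and> adam_finite_mem G str))"
  using eve_part[OF assms] adam_part[OF assms] by blast


end
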